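(* Let $a<0$, $b>0$, $k>0$, and let $M:\mathbb{R}^2\to\mathbb{R}^2$ be $C^2$ with $M(0)=0$ and $M'(0)=0$. For $\varepsilon>0$ consider the impacting system $$\begin{pmatrix}\dot x\\ \dot y\end{pmatrix}=\begin{pmatrix}ax-by\\ bx+ay\end{pmatrix}+M(x,y)\quad\text{if } y-\varepsilon<0,\qquad x\mapsto -k\varepsilon\ (\text{$y$ unchanged})\quad\text{if } y-\varepsilon=0.$$ If $$\frac{a}{b}\cdot\frac{3\pi}{2}-\frac{a}{b}\,\mathrm{arccot}(-k)+\frac12\ln(1+k^2)>\frac{a}{b}\Big(-\frac{\pi}{2}\Big)-\frac{a}{b}\,\mathrm{arccot}\Big(-\frac{a}{b}\Big)+\frac12\ln\Big(1+\frac{a^2}{b^2}\Big),$$ then for all sufficiently small $\varepsilon>0$ the system admits a finite-time stable limit cycle $(x_\varepsilon(t),y_\varepsilon(t))$ with exactly one impact per period, which shrinks to the origin as $\varepsilon\to0$.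
   Context: $\mathrm{arccot}$ takes values in $(0,\pi)$. A periodic orbit is finite-time stable if every trajectory starting in a sufficiently small neighborhood of it coincides with the periodic orbit (up to a time shift) after finite time. *)

theory Defs
  imports "HOL-Analysis.Analysis"
begin

text \<open>Inverse cotangent with values in (0, pi).\<close>
definition arccot :: "real \<Rightarrow> real" where
  "arccot u = pi / 2 - arctan u"

definition C2_map :: "(real \<times> real \<Rightarrow> real \<times> real) \<Rightarrow> bool" where
  "C2_map M \<longleftrightarrow> (\<exists>DM D2M.
      (\<forall>x. (M has_derivative blinfun_apply (DM x)) (at x)) \<and>
      (\<forall>x. (DM has_derivative blinfun_apply (D2M x)) (at x)) \<and>
      continuous_on UNIV D2M)"

definition vfield :: "real \<Rightarrow> real \<Rightarrow> (real \<times> real \<Rightarrow> real \<times> real) \<Rightarrow> real \<times> real \<Rightarrow> real \<times> real" where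
  "vfield a b M p = (a * fst p - b * snd p, b * fst p + a * snd p) + M p"

definition impact_times :: "real \<Rightarrow> (real \<Rightarrow> real \<times> real) \<Rightarrow> real set" where
  "impact_times eps z = {t. t > 0 \<and> (\<exists>x. (z \<longlongrightarrow> (x, eps)) (at_left t))}"

text \<open>z : [0,inf) -> R^2 is a (forward) trajectory of the impacting system starting at the
  initial state p (with snd p <= eps).  If p lies on the switching line y = eps, the impact
  rule is applied at time 0.  At impact times the state is the post-impact state
  (-k eps, eps) (right-continuous convention); between impacts the ODE holds.\<close>
definition impact_traj ::
  "real \<Rightarrow> real \<Rightarrow> real \<Rightarrow> (real \<times> real \<Rightarrow> real \<times> real) \<Rightarrow> real \<Rightarrow> real \<times> real \<Rightarrow> (real \<Rightarrow> real \<times> real) \<Rightarrow> bool"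
where
  "impact_traj a b k M eps p z \<longleftrightarrow>
     snd p \<le> eps \<and>
     z 0 = (if snd p = eps then (- k * eps, eps) else p) \<and>
     (\<forall>t\<ge>0. snd (z t) \<le> eps) \<and>
     (\<forall>t\<ge>0. (z has_vector_derivative vfield a b M (z t)) (at t within {t..})) \<and>
     (\<forall>t>0. if t \<in> impact_times eps z then z t = (- k * eps, eps)
            else (z has_vector_derivative vfield a b M (z t)) (at t))"

definition periodic_one_impact ::
  "real \<Rightarrow> real \<Rightarrow> real \<Rightarrow> (real \<times> real \<Rightarrow> real \<times> real) \<Rightarrow> real \<Rightarrow> (real \<Rightarrow> real \<times> real) \<Rightarrow> real \<Rightarrow> bool"
where
  "periodic_one_impact a b k M eps z T \<longleftrightarrow>
     impact_traj a b k M eps (z 0) z \<and> T > 0 \<and>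
     (\<forall>t\<ge>0. z (t + T) = z t) \<and>
     (\<forall>s\<ge>0. card (impact_times eps z \<inter> {s<..s + T}) = 1)"

definition finite_time_stable ::
  "real \<Rightarrow> real \<Rightarrow> real \<Rightarrow> (real \<times> real \<Rightarrow> real \<times> real) \<Rightarrow> real \<Rightarrow> (real \<Rightarrow> real \<times> real) \<Rightarrow> bool"
where
  "finite_time_stable a b k M eps z \<longleftrightarrow>
     (\<exists>\<delta>>0. \<forall>p w. infdist p (z ` {0..}) < \<delta> \<longrightarrow> impact_traj a b k M eps p w \<longrightarrow>
        (\<exists>t1\<ge>0. \<exists>s\<ge>0. \<forall>t\<ge>t1. w t = z (t + s)))"

end

theory Submission
  imports Defs
begin


lemma lipschitz_cont:
  fixes F :: "real \<times> real \<Rightarrow> real \<times> real"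
  assumes "\<forall>x y. dist (F x) (F y) \<le> L * dist x y" "L \<ge> 0"
  shows "continuous_on S F"
  by (rule lipschitz_on_continuous_on[of L UNIV F, THEN continuous_on_subset])
     (auto intro!: lipschitz_onI simp: assms)

lemma exp_integral_aux:
  fixes L c :: real assumes "L > 0" "c \<ge> 0"
  shows "integral {0..c} (\<lambda>s. L * exp (2*L * s)) = (exp (2*L * c) - 1) / 2"
proof -
  have "((\<lambda>s. L * exp (2*L * s)) has_integral ((\<lambda>s. exp (2*L * s)/2) c - (\<lambda>s. exp (2*L * s)/2) 0)) {0..c}"
    apply (rule fundamental_theorem_of_calculus)
    using assms apply simp
    apply (rule has_vector_derivative_at_within)
    apply (subst has_real_derivative_iff_has_vector_derivative[symmetric])
    by (auto intro!: derivative_eq_intros)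
  from integral_unique[OF this] show ?thesis by (simp add: diff_divide_distrib)
qed

lemma picard:
  fixes F :: "real \<times> real \<Rightarrow> real \<times> real"
  assumes lip: "\<forall>x y. dist (F x) (F y) \<le> L * dist x y" and L: "L > 0" and T: "T \<ge> 0"
  shows "\<exists>u. u 0 = x0 \<and> (\<forall>t\<in>{0..T}. (u has_vector_derivative F (u t)) (at t within {0..T}))"
proof -
  define c where "c t = max 0 (min T t)" for t :: real
  have c_in: "c t \<in> {0..T}" for t using T by (auto simp: c_def)
  have c_cont: "continuous_on UNIV c" unfolding c_def by (intro continuous_intros)
  have c_id: "t \<in> {0..T} \<Longrightarrow> c t = t" for t by (auto simp: c_def)
  have Fc: "continuous_on S F" for S using lipschitz_cont[OF lip] L by simp
  define U where "U g t = exp (2*L * c t) *\<^sub>R apply_bcontfun g t" for g :: "real \<Rightarrow>\<^sub>C (real\<times>real)" and t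
  have U_cont: "continuous_on S (U g)" for g S
    unfolding U_def by (intro continuous_intros continuous_on_compose2[OF c_cont]) auto
  have FU_cont: "continuous_on S (\<lambda>s. F (U g s))" for g S
    by (rule continuous_on_compose2[OF Fc U_cont]) auto
  define I where "I g x = integral {0..x} (\<lambda>s. F (U g s))" for g x
  have int_der: "(I g has_vector_derivative F (U g x)) (at x within {0..T})" if "x \<in> {0..T}" for g x
    unfolding I_def by (rule integral_has_vector_derivative[OF FU_cont that])
  have int_cont: "continuous_on {0..T} (I g)" for g
    using int_der by (meson continuous_on_eq_continuous_within has_vector_derivative_continuous)
  define G where "G g t = x0 + I g (c t)" for g t
  have G_cont: "continuous_on UNIV (G g)" for g
    unfolding G_def by (intro continuous_intros continuous_on_compose2[OF int_cont c_cont]) (use c_in in auto)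
  have G_bdd: "bounded (range (G g))" for g
  proof -
    have "range (G g) \<subseteq> (\<lambda>x. x0 + I g x) ` {0..T}" unfolding G_def using c_in by auto
    moreover have "compact ((\<lambda>x. x0 + I g x) ` {0..T})"
      by (intro compact_continuous_image continuous_intros int_cont) auto
    ultimately show ?thesis using compact_imp_bounded bounded_subset by blast
  qed
  define Qf where "Qf g t = exp (-2*L * c t) *\<^sub>R G g t" for g t
  have Qf_bc: "Qf g \<in> bcontfun" for g
  proof -
    obtain B where B: "\<And>x. norm (G g x) \<le> B" using G_bdd[of g] unfolding bounded_iff by auto
    have "norm (Qf g x) \<le> B" for x
    proof -
      have "norm (Qf g x) = exp (-2*L * c x) * norm (G g x)" by (simp add: Qf_def)
      also have "\<dots> \<le> 1 * norm (G g x)"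
        using c_in[of x] L by (intro mult_right_mono) auto
      finally show ?thesis using B[of x] by simp
    qed
    moreover have "continuous_on UNIV (Qf g)" unfolding Qf_def
      by (intro continuous_intros G_cont continuous_on_compose2[OF c_cont]) auto
    ultimately show ?thesis by (intro bcontfun_normI)
  qed
  define Q where "Q g = Bcontfun (Qf g)" for g
  have Qapp: "apply_bcontfun (Q g) = Qf g" for g unfolding Q_def using Qf_bc Bcontfun_inverse by blast
  have contr: "dist (Q g1) (Q g2) \<le> (1/2) * dist g1 g2" for g1 g2
  proof (rule dist_bound)
    fix t
    define D where "D = dist g1 g2"
    have D0: "D \<ge> 0" by (simp add: D_def)
    let ?ct = "c t"
    have ct: "?ct \<in> {0..T}" by (rule c_in)
    have sub: "{0..?ct} \<subseteq> {0..T}" using ct by auto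
    have i1: "(\<lambda>s. F (U g1 s)) integrable_on {0..?ct}" 
      by (rule integrable_continuous_interval[OF FU_cont])
    have i2: "(\<lambda>s. F (U g2 s)) integrable_on {0..?ct}" 
      by (rule integrable_continuous_interval[OF FU_cont])
    have ie: "(\<lambda>s. L * exp (2*L * s) * D) integrable_on {0..?ct}"
      by (intro integrable_continuous_interval continuous_intros)
    have pw: "norm (F (U g1 s) - F (U g2 s)) \<le> L * exp (2*L * s) * D" if "s \<in> {0..?ct}" for s
    proof -
      have cs: "c s = s" using that sub c_id by auto
      have "norm (F (U g1 s) - F (U g2 s)) \<le> L * norm (U g1 s - U g2 s)"
        using lip[rule_format, of "U g1 s" "U g2 s"] by (simp add: dist_norm)
      also have "norm (U g1 s - U g2 s) = exp (2*L * s) * dist (g1 s) (g2 s)"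
        by (simp add: U_def cs dist_norm scaleR_diff_right[symmetric])
      also have "dist (g1 s) (g2 s) \<le> D" unfolding D_def by (rule dist_bounded)
      finally show ?thesis using L by (simp add: mult_left_mono mult.assoc)
    qed
    have "norm (I g1 ?ct - I g2 ?ct) = norm (integral {0..?ct} (\<lambda>s. F (U g1 s) - F (U g2 s)))"
      unfolding I_def using integral_diff[OF i1 i2] by simp
    also have "\<dots> \<le> integral {0..?ct} (\<lambda>s. L * exp (2*L * s) * D)"
      by (rule integral_norm_bound_integral[OF integrable_diff[OF i1 i2] ie pw])
    also have "\<dots> = D * ((exp (2*L * ?ct) - 1) / 2)"
      using exp_integral_aux[OF L, of ?ct] ct by (simp add: mult.commute)
    finally have n: "norm (I g1 ?ct - I g2 ?ct) \<le> D * ((exp (2*L * ?ct) - 1) / 2)" .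
    have "dist (Q g1 t) (Q g2 t) = exp (-2*L * ?ct) * norm (I g1 ?ct - I g2 ?ct)"
      by (simp add: Qapp Qf_def G_def dist_norm scaleR_diff_right[symmetric])
    also have "\<dots> \<le> exp (-2*L * ?ct) * (D * ((exp (2*L * ?ct) - 1) / 2))"
      by (rule mult_left_mono[OF n]) simp
    also have "\<dots> = D * (1 - exp (-2*L * ?ct)) / 2"
      by (simp add: field_simps exp_minus[symmetric] exp_add[symmetric])
    also have "\<dots> \<le> D / 2" using D0 mult_left_mono[of "1 - exp (-2*L * ?ct)" 1 D] by simp
    finally show "dist (Q g1 t) (Q g2 t) \<le> 1/2 * dist g1 g2" by (simp add: D_def)
  qed
  obtain g where g: "Q g = g" using banach_fix_type[of "1/2" Q] contr by auto
  define u where "u = U g"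
  have ueq: "u t = G g t" if "t \<in> {0..T}" for t
  proof -
    have "apply_bcontfun g t = Qf g t" using g Qapp by metis
    then show ?thesis unfolding u_def U_def Qf_def
      by (simp add: exp_minus[symmetric] exp_add[symmetric])
  qed
  have u0: "u 0 = x0" using ueq[of 0] T by (simp add: G_def I_def c_id)
  have "(u has_vector_derivative F (u t)) (at t within {0..T})" if "t \<in> {0..T}" for t
  proof (rule has_vector_derivative_transform[OF that])
    show "u x = x0 + I g x" if "x \<in> {0..T}" for x using ueq[OF that] c_id[OF that] by (simp add: G_def)
    show "((\<lambda>x. x0 + I g x) has_vector_derivative F (u t)) (at t within {0..T})"
      using int_der[OF that, of g] unfolding u_def by (auto intro!: derivative_eq_intros)
  qed
  then show ?thesis using u0 by blast
qed


lemma inner_self_deriv: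
  fixes u :: "real \<Rightarrow> real \<times> real"
  assumes "(u has_vector_derivative u') (at s)"
  shows "((\<lambda>s. inner (u s) (u s)) has_real_derivative 2 * inner (u s) u') (at s)"
proof -
  have d: "(u has_derivative (\<lambda>h. h *\<^sub>R u')) (at s)" using assms by (simp add: has_vector_derivative_def)
  have "((\<lambda>s. inner (u s) (u s)) has_derivative (\<lambda>h. inner (u s) (h *\<^sub>R u') + inner (h *\<^sub>R u') (u s))) (at s)"
    by (rule has_derivative_inner[OF d d])
  then show ?thesis unfolding has_field_derivative_def
    by (rule has_derivative_eq_rhs) (auto simp: fun_eq_iff inner_commute algebra_simps)
qed

lemma cont_le_left:
  fixes \<phi> :: "real \<Rightarrow> real"
  assumes "a < c" "continuous_on {a..c} \<phi>" "\<forall>s\<in>{a..<c}. \<phi> s \<le> B"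
  shows "\<phi> c \<le> B"
proof -
  have "c \<in> {a..c}" using assms(1) by simp
  then have "continuous (at c within {a..c}) \<phi>" using assms(2) continuous_on_eq_continuous_within by blast
  then have "(\<phi> \<longlongrightarrow> \<phi> c) (at c within {a..c})" by (simp add: continuous_within)
  then have "(\<phi> \<longlongrightarrow> \<phi> c) (at c within {a..<c})" by (rule tendsto_within_subset) auto
  moreover have "at c within {a..<c} \<noteq> bot"
    using assms(1) by (simp add: at_within_eq_bot_iff)
  moreover have "\<forall>\<^sub>F s in at c within {a..<c}. \<phi> s \<le> B"
    using assms(3) by (auto simp: eventually_at_filter)
  ultimately show ?thesis using tendsto_upperbound by blast
qed

lemma gronwall_cmp:
  fixes w v :: "real \<Rightarrow> real \<times> real" and V F :: "real \<times> real \<Rightarrow> real \<times> real"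
  assumes ab: "a \<le> b" and L: "L > 0"
    and wc: "continuous_on {a..b} w" and vc: "continuous_on {a..b} v"
    and wd: "\<And>t. a < t \<Longrightarrow> t < b \<Longrightarrow> (w has_vector_derivative V (w t)) (at t)"
    and vd: "\<And>t. a < t \<Longrightarrow> t < b \<Longrightarrow> (v has_vector_derivative F (v t)) (at t)"
    and lip: "\<forall>x y. dist (F x) (F y) \<le> L * dist x y"
    and agree: "\<And>t x. t \<in> {a..b} \<Longrightarrow> dist x (v t) < \<rho> \<Longrightarrow> V x = F x"
    and init: "dist (w a) (v a) \<le> \<delta>" and small: "\<delta> * exp (L * (b - a)) < \<rho>"
  shows "\<forall>t\<in>{a..b}. dist (w t) (v t) \<le> \<delta> * exp (L * (t - a))"
proof -
  define u where "u t = w t - v t" for t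
  define g where "g t = inner (u t) (u t) * exp (-2 * L * (t - a))" for t
  have \<delta>0: "\<delta> \<ge> 0" using init zero_le_dist order_trans by blast
  have step: "dist (w t) (v t) \<le> \<delta> * exp (L * (t - a))"
    if t: "t \<in> {a..b}" and inside: "\<forall>s\<in>{a..t}. dist (w s) (v s) < \<rho>" for t
  proof -
    have "g t \<le> g a"
    proof (cases "t = a")
      case False
      then have at: "a < t" using t by auto
      have gc: "continuous_on {a..t} g" unfolding g_def u_def
        using t by (intro continuous_intros continuous_on_subset[OF wc] continuous_on_subset[OF vc]) auto
      have gd: "(g has_real_derivative
          (2 * inner (u s) (V (w s) - F (v s)) * exp (-2 * L * (s - a))
           + inner (u s) (u s) * (exp (-2 * L * (s - a)) * (-2 * L)))) (at s)"
        if "a < s" "s < t" for s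
      proof -
        have "(u has_vector_derivative (V (w s) - F (v s))) (at s)"
          unfolding u_def using that t by (intro derivative_intros wd vd) auto
        from inner_self_deriv[OF this] show ?thesis unfolding g_def
          by (auto intro!: derivative_eq_intros)
      qed
      obtain l z where z: "a < z" "z < t" "DERIV g z :> l" "g t - g a = (t - a) * l"
      proof -
        have "\<And>x. a < x \<Longrightarrow> x < t \<Longrightarrow> g differentiable (at x)"
          using gd real_differentiable_def by blast
        from MVT[OF at gc this] show ?thesis using that by blast
      qed
      have l: "l = 2 * inner (u z) (V (w z) - F (v z)) * exp (-2 * L * (z - a))
           + inner (u z) (u z) * (exp (-2 * L * (z - a)) * (-2 * L))"
        using DERIV_unique[OF z(3) gd[OF z(1,2)]] .
      have zin: "z \<in> {a..b}" using z t by auto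
      have "dist (w z) (v z) < \<rho>" using inside z by auto
      then have Vw: "V (w z) = F (w z)" using agree[OF zin, of "w z"] by simp
      have "inner (u z) (V (w z) - F (v z)) \<le> norm (u z) * norm (F (w z) - F (v z))"
        using Vw norm_cauchy_schwarz by simp
      also have "\<dots> \<le> norm (u z) * (L * norm (u z))"
        using lip[rule_format, of "w z" "v z"] by (intro mult_left_mono) (auto simp: dist_norm u_def)
      also have "\<dots> = L * inner (u z) (u z)" by (simp add: power2_norm_eq_inner[symmetric] power2_eq_square)
      finally have "inner (u z) (V (w z) - F (v z)) \<le> L * inner (u z) (u z)" .
      then have "l \<le> 0"
      proof -
        have "l = (2 * exp (-2 * L * (z - a))) * (inner (u z) (V (w z) - F (v z)) - L * inner (u z) (u z))"
          unfolding l by (simp add: algebra_simps)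
        then show ?thesis using \<open>inner (u z) (V (w z) - F (v z)) \<le> L * inner (u z) (u z)\<close>
          by (simp add: mult_nonneg_nonpos)
      qed
      then show ?thesis using z at using mult_nonneg_nonpos[of "t - a" l] by simp
    qed simp
    moreover have "g a \<le> \<delta>\<^sup>2" using init \<delta>0
      by (simp add: g_def u_def power2_norm_eq_inner[symmetric] dist_norm power_mono)
    ultimately have "(norm (u t))\<^sup>2 * exp (-2 * L * (t - a)) \<le> \<delta>\<^sup>2"
      by (simp add: g_def power2_norm_eq_inner)
    then have "(norm (u t))\<^sup>2 * exp (-2 * L * (t - a)) * exp (2 * L * (t - a)) \<le> \<delta>\<^sup>2 * exp (2 * L * (t - a))"
      by (intro mult_right_mono) auto
    then have "(norm (u t))\<^sup>2 \<le> \<delta>\<^sup>2 * exp (2 * L * (t - a))"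
      by (simp add: mult.assoc exp_add[symmetric])
    also have "\<dots> = (\<delta> * exp (L * (t - a)))\<^sup>2"
      by (simp add: power_mult_distrib power2_eq_square exp_add[symmetric])
    finally have "(norm (u t))\<^sup>2 \<le> (\<delta> * exp (L * (t - a)))\<^sup>2" .
    then have "norm (u t) \<le> \<delta> * exp (L * (t - a))" by (rule power2_le_imp_le) (use \<delta>0 in simp)
    then show ?thesis by (simp add: dist_norm u_def)
  qed
  define \<rho>' where "\<rho>' = \<delta> * exp (L * (b - a))"
  define S where "S = {t\<in>{a..b}. \<forall>s\<in>{a..t}. dist (w s) (v s) < \<rho>}"
  have bnd: "dist (w s) (v s) \<le> \<rho>'" if "t \<in> S" "s \<in> {a..t}" for s t
  proof -
    have "dist (w s) (v s) \<le> \<delta> * exp (L * (s - a))"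
      using step[of s] that by (auto simp: S_def)
    also have "\<dots> \<le> \<rho>'" unfolding \<rho>'_def using \<delta>0 that L
      by (intro mult_left_mono) (auto simp: S_def)
    finally show ?thesis .
  qed
  have \<rho>'\<rho>: "\<rho>' < \<rho>" using small by (simp add: \<rho>'_def)
  have \<delta>\<rho>': "\<delta> \<le> \<rho>'" unfolding \<rho>'_def using \<delta>0 ab L
    using mult_left_mono[of 1 "exp (L * (b - a))" \<delta>] by simp
  have aS: "a \<in> S" using ab init \<delta>\<rho>' \<rho>'\<rho> by (auto simp: S_def)
  have Sb: "S \<subseteq> {a..b}" by (auto simp: S_def)
  define c where "c = Sup S"
  have bddS: "bdd_above S" by (rule bdd_above_mono[OF bdd_above_Icc Sb])
  have ac: "a \<le> c" unfolding c_def using aS bddS by (rule cSup_upper)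
  have cb: "c \<le> b" unfolding c_def using aS Sb by (intro cSup_least) auto
  have phic: "continuous_on {a..b} (\<lambda>s. dist (w s) (v s))" by (intro continuous_intros wc vc)
  have below: "\<forall>s\<in>{a..<c}. dist (w s) (v s) \<le> \<rho>'"
  proof
    fix s assume s: "s \<in> {a..<c}"
    then obtain t where "t \<in> S" "s < t" using less_cSupD[of S s] aS unfolding c_def by auto
    then show "dist (w s) (v s) \<le> \<rho>'" using bnd s by auto
  qed
  have atc: "dist (w c) (v c) \<le> \<rho>'"
  proof (cases "a = c")
    case True then show ?thesis using init \<delta>\<rho>' by simp
  next
    case False
    then show ?thesis using cont_le_left[of a c "\<lambda>s. dist (w s) (v s)" \<rho>'] below ac cb
      continuous_on_subset[OF phic, of "{a..c}"] by auto
  qed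
  have cS: "c \<in> S"
  proof -
    have "\<forall>s\<in>{a..c}. dist (w s) (v s) < \<rho>"
    proof
      fix s assume s: "s \<in> {a..c}"
      show "dist (w s) (v s) < \<rho>"
      proof (cases "s < c")
        case True then show ?thesis using below s \<rho>'\<rho> by force
      next
        case False then have "s = c" using s by simp
        then show ?thesis using atc \<rho>'\<rho> by simp
      qed
    qed
    then show ?thesis using ac cb by (auto simp: S_def)
  qed
  have "c = b"
  proof (rule ccontr)
    assume "c \<noteq> b" then have cb': "c < b" using cb by auto
    have "dist (w c) (v c) < \<rho>" using atc \<rho>'\<rho> by linarith
    then obtain d where d: "d > 0" "\<forall>s\<in>{a..b}. dist s c < d \<longrightarrow> dist (w s) (v s) < \<rho>"
    proof -
      have cin: "c \<in> {a..b}" using ac cb by simp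
      have "\<exists>d>0. \<forall>s\<in>{a..b}. dist s c < d \<longrightarrow> dist (dist (w s) (v s)) (dist (w c) (v c)) < \<rho> - dist (w c) (v c)"
        using phic cin \<open>dist (w c) (v c) < \<rho>\<close> unfolding continuous_on_iff by simp
      then obtain d where d0: "d > 0" and
        d1: "\<forall>s\<in>{a..b}. dist s c < d \<longrightarrow> dist (dist (w s) (v s)) (dist (w c) (v c)) < \<rho> - dist (w c) (v c)"
        by blast
      have "\<forall>s\<in>{a..b}. dist s c < d \<longrightarrow> dist (w s) (v s) < \<rho>"
        using d1 by (auto simp: dist_real_def abs_less_iff)
      then show ?thesis using that d0 by blast
    qed
    define t' where "t' = min b (c + d/2)"
    have "t' \<in> S" unfolding S_def
    proof (safe)
      show "t' \<in> {a..b}" using ac cb' d by (auto simp: t'_def)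
      fix s assume s: "s \<in> {a..t'}"
      show "dist (w s) (v s) < \<rho>"
      proof (cases "s \<le> c")
        case True then show ?thesis using cS s by (auto simp: S_def)
      next
        case False then show ?thesis using d s ac by (auto simp: t'_def dist_real_def)
      qed
    qed
    then have "t' \<le> c" unfolding c_def using bddS by (rule cSup_upper)
    then show False using cb' d by (auto simp: t'_def)
  qed
  then have bS: "b \<in> S" using cS by simp
  show ?thesis using step bS by (auto simp: S_def)
qed


lemma snd_deriv:
  fixes w :: "real \<Rightarrow> real \<times> real"
  assumes "(w has_vector_derivative v) (at t within S)"
  shows "((\<lambda>t. snd (w t)) has_real_derivative snd v) (at t within S)"
proof -
  have "(w has_derivative (\<lambda>h. h *\<^sub>R v)) (at t within S)" using assms by (simp add: has_vector_derivative_def)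
  from has_derivative_snd[OF this] show ?thesis unfolding has_field_derivative_def
    by (rule has_derivative_eq_rhs) (auto simp: fun_eq_iff)
qed

lemma deriv_shift_at:
  fixes sol :: "real \<Rightarrow> real \<times> real"
  assumes "(sol has_vector_derivative D) (at (t - s0))"
  shows "((\<lambda>t. sol (t - s0)) has_vector_derivative D) (at t)"
proof -
  have "((\<lambda>t. t - s0) has_vector_derivative 1) (at t)"
    by (auto intro!: derivative_eq_intros simp: has_real_derivative_iff_has_vector_derivative[symmetric])
  from vector_diff_chain_at[OF this] assms show ?thesis by (simp add: o_def)
qed

lemma deriv_shift_within:
  fixes sol :: "real \<Rightarrow> real \<times> real"
  assumes "(sol has_vector_derivative D) (at (t - s0) within (\<lambda>t. t - s0) ` S)"
  shows "((\<lambda>t. sol (t - s0)) has_vector_derivative D) (at t within S)"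
proof -
  have "((\<lambda>t. t - s0) has_vector_derivative 1) (at t within S)"
    by (auto intro!: derivative_eq_intros simp: has_real_derivative_iff_has_vector_derivative[symmetric])
  from vector_diff_chain_within[OF this] assms show ?thesis by (simp add: o_def)
qed

locale impact_sys =
  fixes a b k :: real and M :: "real \<times> real \<Rightarrow> real \<times> real" and \<epsilon> :: real
    and sol :: "real \<Rightarrow> real \<times> real" and T tm L \<rho> :: real
    and F :: "real \<times> real \<Rightarrow> real \<times> real"
  assumes eps: "\<epsilon> > 0" and Lpos: "L > 0" and rho: "\<rho> > 0"
    and T: "0 < T" "T < tm"
    and sol0: "sol 0 = (- k * \<epsilon>, \<epsilon>)"
    and sold: "\<And>t. t \<in> {0..tm} \<Longrightarrow> (sol has_vector_derivative F (sol t)) (at t within {0..tm})"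
    and lip: "\<forall>x y. dist (F x) (F y) \<le> L * dist x y"
    and agree: "\<And>t x. t \<in> {0..tm} \<Longrightarrow> dist x (sol t) < \<rho> \<Longrightarrow> vfield a b M x = F x"
    and below: "\<And>t. 0 < t \<Longrightarrow> t < T \<Longrightarrow> snd (sol t) < \<epsilon>"
    and hit: "snd (sol T) = \<epsilon>"
    and above: "snd (sol tm) > \<epsilon>"
    and negd: "snd (vfield a b M (- k * \<epsilon>, \<epsilon>)) < 0"
begin

lemma F_sol: "t \<in> {0..tm} \<Longrightarrow> F (sol t) = vfield a b M (sol t)"
  using agree[of t "sol t"] rho by simp

lemma sol_cont: "continuous_on {0..tm} sol"
  using sold by (meson continuous_on_eq_continuous_within has_vector_derivative_continuous)

lemma sol_at: "0 < t \<Longrightarrow> t < tm \<Longrightarrow> (sol has_vector_derivative F (sol t)) (at t)"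
proof -
  assume t: "0 < t" "t < tm"
  have "(sol has_vector_derivative F (sol t)) (at t within {0..tm})" using sold t by simp
  then have "(sol has_vector_derivative F (sol t)) (at t within {0<..<tm})"
    by (rule has_vector_derivative_within_subset) auto
  then show ?thesis by (subst (asm) has_vector_derivative_within_open) (use t in auto)
qed

definition z :: "real \<Rightarrow> real \<times> real" where
  "z t = sol (t - T * of_int \<lfloor>t / T\<rfloor>)"

lemma floor_eq_n: "T * of_int n \<le> t \<Longrightarrow> t < T * (of_int n + 1) \<Longrightarrow> \<lfloor>t / T\<rfloor> = n"
  using T by (intro floor_unique) (auto simp: field_simps)

lemma z_eq: "T * of_int n \<le> t \<Longrightarrow> t < T * (of_int n + 1) \<Longrightarrow> z t = sol (t - T * of_int n)"
  unfolding z_def using floor_eq_n by simp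

lemma fr_bounds: "0 \<le> t - T * of_int \<lfloor>t / T\<rfloor>" "t - T * of_int \<lfloor>t / T\<rfloor> < T"
  using floor_divide_lower[OF T(1), of t] floor_divide_upper[OF T(1), of t]
  by (auto simp: algebra_simps)

lemma z_per_int: "z (t + T * of_int m) = z t"
proof -
  have "\<lfloor>(t + T * of_int m) / T\<rfloor> = \<lfloor>t / T\<rfloor> + m"
    using T by (simp add: add_divide_distrib)
  then show ?thesis unfolding z_def by (simp add: algebra_simps)
qed

lemma z_per: "z (t + T) = z t"
  using z_per_int[of t 1] by simp

lemma z0: "z 0 = (- k * \<epsilon>, \<epsilon>)" unfolding z_def using sol0 by simp

lemma z_snd_le: "snd (z t) \<le> \<epsilon>"
proof -
  define r where "r = t - T * of_int \<lfloor>t / T\<rfloor>"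
  have r: "0 \<le> r" "r < T" using fr_bounds unfolding r_def by auto
  show ?thesis
  proof (cases "r = 0")
    case True then show ?thesis unfolding z_def r_def[symmetric] using sol0 by simp
  next
    case False then show ?thesis unfolding z_def r_def[symmetric] using below[of r] r by simp
  qed
qed

end


context impact_sys begin

lemma fr_facts:
  obtains n :: int and r where "t = T * of_int n + r" "0 \<le> r" "r < T" "z t = sol r"
    "n = \<lfloor>t / T\<rfloor>"
  using fr_bounds[of t] unfolding z_def by (metis add.commute diff_add_cancel)

lemma z_right: "(z has_vector_derivative vfield a b M (z t)) (at t within {t..})"
proof -
  obtain n r where nr: "t = T * of_int n + r" "0 \<le> r" "r < T" "z t = sol r" by (rule fr_facts)
  define S where "S = {t..<T * (of_int n + 1)}"
  have tS: "t \<in> S" using nr by (auto simp: S_def algebra_simps)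
  have zS: "z s = sol (s - T * of_int n)" if "s \<in> S" for s
    using that nr by (intro z_eq) (auto simp: S_def algebra_simps)
  have img: "(\<lambda>s. s - T * of_int n) ` S \<subseteq> {0..tm}" using nr T by (auto simp: S_def algebra_simps)
  have r0: "r \<in> {0..tm}" using nr T by auto
  have "(sol has_vector_derivative F (sol r)) (at r within (\<lambda>s. s - T * of_int n) ` S)"
    by (rule has_vector_derivative_within_subset[OF sold[OF r0] img])
  then have "((\<lambda>s. sol (s - T * of_int n)) has_vector_derivative F (sol r)) (at t within S)"
    using nr by (intro deriv_shift_within) simp
  then have "(z has_vector_derivative F (sol r)) (at t within S)"
    by (rule has_vector_derivative_transform[OF tS zS, rotated]) simp
  moreover have "at t within S = at t within {t..}"
    by (rule at_within_nhd[of _ "{..<T * (of_int n + 1)}"]) (use tS in \<open>auto simp: S_def\<close>)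
  ultimately show ?thesis using nr F_sol[OF r0] by simp
qed

lemma z_at: assumes "t - T * of_int \<lfloor>t / T\<rfloor> \<noteq> 0"
  shows "(z has_vector_derivative vfield a b M (z t)) (at t)"
proof -
  obtain n r where nr: "t = T * of_int n + r" "0 \<le> r" "r < T" "z t = sol r" "n = \<lfloor>t / T\<rfloor>"
    by (rule fr_facts)
  have r0: "0 < r" using nr assms by auto
  define S where "S = {T * of_int n<..<T * (of_int n + 1)}"
  have tS: "t \<in> S" using nr(1-3) r0 by (auto simp: S_def algebra_simps)
  have zS: "sol (s - T * of_int n) = z s" if "s \<in> S" for s
    using that by (intro z_eq[symmetric]) (auto simp: S_def algebra_simps)
  have "(sol has_vector_derivative F (sol r)) (at r)" using sol_at r0 nr(3) T by auto
  then have "((\<lambda>s. sol (s - T * of_int n)) has_vector_derivative F (sol r)) (at t)"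
    using nr(1) by (intro deriv_shift_at) simp
  then have "(z has_vector_derivative F (sol r)) (at t)"
    by (rule has_vector_derivative_transform_within_open[OF _ _ tS zS]) (simp add: S_def)
  then show ?thesis using nr(2-4) F_sol[of r] T by simp
qed

lemma z_left: "(z \<longlongrightarrow> sol T) (at_left (T * of_int m))"
proof -
  define S where "S = {T * (of_int m - 1)..<T * of_int m}"
  have zS: "z s = sol (s - T * (of_int m - 1))" if "s \<in> S" for s
    using that z_eq[of "m - 1" s] by (auto simp: S_def algebra_simps)
  have "continuous_on {T * (of_int m - 1)..T * of_int m} (\<lambda>s. sol (s - T * (of_int m - 1)))"
    by (rule continuous_on_compose2[OF sol_cont]) (use T in \<open>auto intro!: continuous_intros simp: algebra_simps\<close>)
  moreover have mem: "T * of_int m \<in> {T * (of_int m - 1)..T * of_int m}" using T by (auto simp: algebra_simps)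
  ultimately have "((\<lambda>s. sol (s - T * (of_int m - 1))) \<longlongrightarrow> sol (T * of_int m - T * (of_int m - 1))) (at (T * of_int m) within {T * (of_int m - 1)..T * of_int m})"
    unfolding continuous_on_def by blast
  moreover have eqT: "T * of_int m - T * (of_int m - 1) = T" by (simp add: algebra_simps)
  ultimately have "((\<lambda>s. sol (s - T * (of_int m - 1))) \<longlongrightarrow> sol T) (at (T * of_int m) within {T * (of_int m - 1)..T * of_int m})"
    by simp
  then have "((\<lambda>s. sol (s - T * (of_int m - 1))) \<longlongrightarrow> sol T) (at (T * of_int m) within S)"
    by (rule tendsto_within_subset) (auto simp: S_def)
  then have "(z \<longlongrightarrow> sol T) (at (T * of_int m) within S)"
  proof -
    assume that: "((\<lambda>s. sol (s - T * (of_int m - 1))) \<longlongrightarrow> sol T) (at (T * of_int m) within S)"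
    have "\<forall>\<^sub>F s in at (T * of_int m) within S. sol (s - T * (of_int m - 1)) = z s"
      by (auto simp: eventually_at_filter zS)
    from tendsto_cong[OF this] show ?thesis using that by simp
  qed
  moreover have "at (T * of_int m) within S = at_left (T * of_int m)"
    by (rule at_within_nhd[of _ "{T * (of_int m - 1)<..}"]) (use T in \<open>auto simp: S_def\<close>)
  ultimately show ?thesis by simp
qed

end


context impact_sys begin

lemma mult_iff: "(t - T * of_int \<lfloor>t / T\<rfloor> = 0) \<longleftrightarrow> (\<exists>m::int. t = T * of_int m)"
proof
  assume "t - T * of_int \<lfloor>t / T\<rfloor> = 0" then show "\<exists>m::int. t = T * of_int m" by auto
next
  assume "\<exists>m::int. t = T * of_int m"
  then obtain m :: int where m: "t = T * of_int m" by blast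
  then have "t / T = of_int m" using T by simp
  then show "t - T * of_int \<lfloor>t / T\<rfloor> = 0" using m by simp
qed

lemma z_mult: "z (T * of_int m) = (- k * \<epsilon>, \<epsilon>)"
  using z_per_int[of 0 m] z0 by simp

lemma imp_z: "t \<in> impact_times \<epsilon> z \<longleftrightarrow> t > 0 \<and> (\<exists>m::int. t = T * of_int m)"
proof
  assume "t > 0 \<and> (\<exists>m::int. t = T * of_int m)"
  then obtain m :: int where m: "t > 0" "t = T * of_int m" by blast
  have "sol T = (fst (sol T), \<epsilon>)" using hit by (metis prod.collapse)
  then show "t \<in> impact_times \<epsilon> z" unfolding impact_times_def using z_left[of m] m by (auto) (metis)
next
  assume ti: "t \<in> impact_times \<epsilon> z"
  then obtain x where t0: "t > 0" and lim: "(z \<longlongrightarrow> (x, \<epsilon>)) (at_left t)" unfolding impact_times_def by blast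
  show "t > 0 \<and> (\<exists>m::int. t = T * of_int m)"
  proof (rule ccontr)
    assume "\<not> ?thesis"
    then have nm: "t - T * of_int \<lfloor>t / T\<rfloor> \<noteq> 0" using t0 mult_iff by blast
    have "continuous (at t) z" using z_at[OF nm] has_vector_derivative_continuous by blast
    then have "(z \<longlongrightarrow> z t) (at t)" by (simp add: isCont_def)
    then have "(z \<longlongrightarrow> z t) (at_left t)" by (rule tendsto_within_subset) simp
    from tendsto_unique[OF trivial_limit_at_left_real this lim] have "z t = (x, \<epsilon>)" .
    obtain n r where nr: "t = T * of_int n + r" "0 \<le> r" "r < T" "z t = sol r" "n = \<lfloor>t / T\<rfloor>"
      by (rule fr_facts)
    have "r = t - T * of_int \<lfloor>t / T\<rfloor>" unfolding nr(5)[symmetric] using nr(1) by simp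
    then have "r \<noteq> 0" using nm by simp
    then have "snd (sol r) < \<epsilon>" using below[of r] nr(2,3) by simp
    moreover have "snd (sol r) = \<epsilon>" using nr(4) \<open>z t = (x, \<epsilon>)\<close> by (metis snd_conv)
    ultimately show False by simp
  qed
qed

lemma card_imp: assumes s: "s \<ge> 0"
  shows "impact_times \<epsilon> z \<inter> {s<..s + T} = {T * (of_int \<lfloor>s / T\<rfloor> + 1)}"
proof -
  define n where "n = \<lfloor>s / T\<rfloor>"
  have n: "T * of_int n \<le> s" "s < T * (of_int n + 1)"
    using floor_divide_lower[OF T(1), of s] floor_divide_upper[OF T(1), of s]
    by (auto simp: n_def algebra_simps)
  show ?thesis
  proof safe
    fix t assume "t \<in> impact_times \<epsilon> z" "t \<in> {s<..s + T}"
    then obtain m :: int where m: "t = T * of_int m" "s < t" "t \<le> s + T" using imp_z by auto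
    have "T * of_int n < T * of_int m" using m n by linarith
    then have "n < m" using T by simp
    have "T * (of_int n + 2) = T * (of_int n + 1) + T" by (simp add: algebra_simps)
    then have "T * of_int m < T * (of_int n + 2)" using m n by linarith
    then have "m < n + 2" using T by (simp del: of_int_add add: of_int_add[symmetric]) 
    then have "m = n + 1" using \<open>n < m\<close> by linarith
    then show "t = T * (of_int \<lfloor>s / T\<rfloor> + 1)" using m by (simp add: n_def)
  next
    have pos: "T * (of_int n + 1) > 0" using n s by linarith
    have "T * (of_int n + 1) = T * of_int (n + 1)" by simp
    then show "T * (of_int \<lfloor>s / T\<rfloor> + 1) \<in> impact_times \<epsilon> z"
      unfolding imp_z n_def[symmetric] using pos by blast
    show "T * (of_int \<lfloor>s / T\<rfloor> + 1) \<in> {s<..s + T}"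
      using n by (auto simp: n_def[symmetric] algebra_simps)
  qed
qed

theorem z_periodic: "periodic_one_impact a b k M \<epsilon> z T"
  unfolding periodic_one_impact_def
proof (intro conjI allI impI)
  show "impact_traj a b k M \<epsilon> (z 0) z"
    unfolding impact_traj_def
  proof (intro conjI allI impI)
    show "snd (z 0) \<le> \<epsilon>" "z 0 = (if snd (z 0) = \<epsilon> then (- k * \<epsilon>, \<epsilon>) else z 0)" using z0 by auto
    show "snd (z t) \<le> \<epsilon>" for t by (rule z_snd_le)
    show "(z has_vector_derivative vfield a b M (z t)) (at t within {t..})" for t by (rule z_right)
    fix t :: real assume t: "t > 0"
    show "if t \<in> impact_times \<epsilon> z then z t = (- k * \<epsilon>, \<epsilon>)
          else (z has_vector_derivative vfield a b M (z t)) (at t)"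
    proof (cases "t \<in> impact_times \<epsilon> z")
      case True then obtain m :: int where "t = T * of_int m" using imp_z by blast
      then show ?thesis using True z_mult by simp
    next
      case False then have "t - T * of_int \<lfloor>t / T\<rfloor> \<noteq> 0" using imp_z mult_iff t by blast
      then show ?thesis using False z_at by simp
    qed
  qed
  show "T > 0" using T by simp
  show "z (t + T) = z t" for t by (rule z_per)
  show "card (impact_times \<epsilon> z \<inter> {s<..s + T}) = 1" if "s \<ge> 0" for s
    using card_imp[OF that] by simp
qed

end


lemma cont_from_derivs:
  fixes w :: "real \<Rightarrow> real \<times> real"
  assumes "s0 \<le> s1"
    and "(w has_vector_derivative D0) (at s0 within {s0..})"
    and "\<And>t. s0 < t \<Longrightarrow> t \<le> s1 \<Longrightarrow> continuous (at t) w"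
  shows "continuous_on {s0..s1} w"
proof -
  have c0: "continuous (at s0 within {s0..s1}) w"
    using has_vector_derivative_continuous[OF assms(2)] continuous_within_subset by fastforce
  show ?thesis unfolding continuous_on_eq_continuous_within
  proof
    fix t assume t: "t \<in> {s0..s1}"
    show "continuous (at t within {s0..s1}) w"
    proof (cases "t = s0")
      case True then show ?thesis using c0 by simp
    next
      case False then show ?thesis using assms(3)[of t] t continuous_at_imp_continuous_within by auto
    qed
  qed
qed

context impact_sys begin

definition imp :: "(real \<Rightarrow> real \<times> real) \<Rightarrow> real \<Rightarrow> bool" where
  "imp w s \<longleftrightarrow> (\<exists>x. (w \<longlongrightarrow> (x, \<epsilon>)) (at_left s))"

definition H :: "(real \<Rightarrow> real \<times> real) \<Rightarrow> real \<Rightarrow> bool" where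
  "H w t0 \<longleftrightarrow> (\<forall>t\<ge>t0. snd (w t) \<le> \<epsilon>) \<and>
     (\<forall>t\<ge>t0. (w has_vector_derivative vfield a b M (w t)) (at t within {t..})) \<and>
     (\<forall>t>t0. if imp w t then w t = (- k * \<epsilon>, \<epsilon>) else (w has_vector_derivative vfield a b M (w t)) (at t))"

lemma H_mono: "H w t0 \<Longrightarrow> t0 \<le> t1 \<Longrightarrow> H w t1"
  unfolding H_def by auto

lemma H_imp: "H w t0 \<Longrightarrow> t > t0 \<Longrightarrow> imp w t \<Longrightarrow> w t = (- k * \<epsilon>, \<epsilon>)"
  unfolding H_def by auto

lemma H_noimp: "H w t0 \<Longrightarrow> t > t0 \<Longrightarrow> \<not> imp w t \<Longrightarrow> (w has_vector_derivative vfield a b M (w t)) (at t)"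
  unfolding H_def by auto

lemma cmp:
  assumes s01: "s0 \<le> s1" and tau: "\<tau> \<ge> 0" "\<tau> + (s1 - s0) \<le> tm"
    and wc: "continuous_on {s0..s1} w"
    and wd: "\<And>t. s0 < t \<Longrightarrow> t < s1 \<Longrightarrow> (w has_vector_derivative vfield a b M (w t)) (at t)"
    and init: "dist (w s0) (sol \<tau>) \<le> \<delta>" and small: "\<delta> * exp (L * (s1 - s0)) < \<rho>"
  shows "\<forall>t\<in>{s0..s1}. dist (w t) (sol (t - (s0 - \<tau>))) \<le> \<delta> * exp (L * (t - s0))"
proof (rule gronwall_cmp[OF s01 Lpos wc _ wd _ lip _ _ small])
  show "continuous_on {s0..s1} (\<lambda>t. sol (t - (s0 - \<tau>)))"
    by (rule continuous_on_compose2[OF sol_cont]) (use tau in \<open>auto intro!: continuous_intros\<close>)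
  show "((\<lambda>t. sol (t - (s0 - \<tau>))) has_vector_derivative F (sol (t - (s0 - \<tau>)))) (at t)"
    if "s0 < t" "t < s1" for t
    using that tau by (intro deriv_shift_at sol_at) auto
  show "vfield a b M x = F x" if "t \<in> {s0..s1}" "dist x (sol (t - (s0 - \<tau>))) < \<rho>" for t x
    using that tau by (intro agree[of "t - (s0 - \<tau>)"]) auto
  show "dist (w s0) (sol (s0 - (s0 - \<tau>))) \<le> \<delta>" using init by simp
qed

lemma sol_isCont: "0 < r \<Longrightarrow> r < tm \<Longrightarrow> isCont sol r"
  using sol_at has_vector_derivative_continuous by blast

lemma shift_left_lim:
  assumes "0 < s1 - s0" "s1 - s0 < tm" "\<forall>t\<in>{s0..<s1}. w t = sol (t - s0)"
  shows "(w \<longlongrightarrow> sol (s1 - s0)) (at_left s1)"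
proof -
  have "((\<lambda>t. sol (t - s0)) has_vector_derivative F (sol (s1 - s0))) (at s1)"
    using assms by (intro deriv_shift_at sol_at) auto
  then have "isCont (\<lambda>t. sol (t - s0)) s1" using has_vector_derivative_continuous by blast
  then have "((\<lambda>t. sol (t - s0)) \<longlongrightarrow> sol (s1 - s0)) (at s1)" by (simp add: isCont_def)
  then have l1: "((\<lambda>t. sol (t - s0)) \<longlongrightarrow> sol (s1 - s0)) (at_left s1)"
    by (rule tendsto_within_subset) simp
  have ev: "\<forall>\<^sub>F t in at_left s1. sol (t - s0) = w t"
  proof -
    have "\<forall>\<^sub>F t in at_left s1. t \<in> {s0<..<s1}" by (rule eventually_at_left_real) (use assms(1) in simp)
    then show ?thesis by (rule eventually_mono) (use assms(3) in auto)
  qed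
  from tendsto_cong[OF ev] l1 show ?thesis by simp
qed

lemma noimp_agree:
  assumes Hw: "H w t0" and s0: "s0 \<ge> t0" and ws0: "w s0 = (- k * \<epsilon>, \<epsilon>)"
    and s1: "s0 \<le> s1" "s1 - s0 \<le> tm"
    and ni: "\<And>s. s0 < s \<Longrightarrow> s < s1 \<Longrightarrow> \<not> imp w s"
  shows "\<forall>t\<in>{s0..<s1}. w t = sol (t - s0)"
proof
  fix t assume t: "t \<in> {s0..<s1}"
  have rd: "(w has_vector_derivative vfield a b M (w s0)) (at s0 within {s0..})"
    using Hw s0 unfolding H_def by auto
  have wd: "(w has_vector_derivative vfield a b M (w u)) (at u)" if "s0 < u" "u < s1" for u
    using H_noimp[OF Hw _ ni[OF that]] that s0 by simp
  have wc: "continuous_on {s0..t} w"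
  proof (rule cont_from_derivs[OF _ rd])
    show "s0 \<le> t" using t by simp
    fix u assume "s0 < u" "u \<le> t"
    then have "(w has_vector_derivative vfield a b M (w u)) (at u)" using wd t by simp
    then show "isCont w u" using has_vector_derivative_continuous by blast
  qed
  have "\<forall>u\<in>{s0..t}. dist (w u) (sol (u - (s0 - 0))) \<le> 0 * exp (L * (u - s0))"
    by (rule cmp[OF _ _ _ wc]) (use t s1 wd ws0 sol0 rho in auto)
  then show "w t = sol (t - s0)" using t by auto
qed

lemma one_period:
  assumes Hw: "H w t0" and s0: "s0 \<ge> t0" and ws0: "w s0 = (- k * \<epsilon>, \<epsilon>)"
  shows "(\<forall>r\<in>{0..<T}. w (s0 + r) = sol r) \<and> w (s0 + T) = (- k * \<epsilon>, \<epsilon>)"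
proof -
  have rd: "(w has_vector_derivative vfield a b M (w s0)) (at s0 within {s0..})"
    using Hw s0 unfolding H_def by auto
  from has_real_derivative_neg_dec_right[OF snd_deriv[OF rd]] negd ws0
  obtain d where d: "d > 0" "\<And>h. h > 0 \<Longrightarrow> h < d \<Longrightarrow> snd (w (s0 + h)) < \<epsilon>"
    by auto
  have noimp_d: "\<not> imp w s" if "s0 < s" "s < s0 + d" for s
  proof
    assume "imp w s"
    then have "w s = (- k * \<epsilon>, \<epsilon>)" using H_imp[OF Hw] that s0 by auto
    moreover have "snd (w (s0 + (s - s0))) < \<epsilon>" using d(2)[of "s - s0"] that by auto
    ultimately show False by simp
  qed
  define J where "J = {s. s0 < s \<and> s < s0 + T \<and> imp w s}"
  have Jempty: "J = {}"
  proof (rule ccontr)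
    assume "J \<noteq> {}"
    define s1 where "s1 = Inf J"
    have Jlow: "s0 + d \<le> s" if "s \<in> J" for s
      using noimp_d[of s] that unfolding J_def by force
    have bddJ: "bdd_below J" using Jlow unfolding bdd_below_def by blast
    have s1d: "s0 + d \<le> s1" unfolding s1_def using \<open>J \<noteq> {}\<close> Jlow by (intro cInf_greatest) auto
    obtain sJ where sJ: "sJ \<in> J" using \<open>J \<noteq> {}\<close> by blast
    have s1le: "s1 \<le> sJ" unfolding s1_def by (rule cInf_lower[OF sJ bddJ])
    have s1T: "s1 < s0 + T" using sJ s1le unfolding J_def by auto
    have ni: "\<not> imp w s" if "s0 < s" "s < s1" for s
    proof
      assume "imp w s"
      then have "s \<in> J" using that s1T unfolding J_def by auto
      then have "s1 \<le> s" unfolding s1_def by (rule cInf_lower[OF _ bddJ])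
      then show False using that by simp
    qed
    have agreeJ: "\<forall>t\<in>{s0..<s1}. w t = sol (t - s0)"
      by (rule noimp_agree[OF Hw s0 ws0]) (use s1d d s1T T ni in auto)
    have lim: "(w \<longlongrightarrow> sol (s1 - s0)) (at_left s1)"
      by (rule shift_left_lim) (use s1d d s1T T agreeJ in auto)
    have sb: "snd (sol (s1 - s0)) < \<epsilon>" using below[of "s1 - s0"] s1d d s1T by auto
    have nimp1: "\<not> imp w s1"
    proof
      assume "imp w s1"
      then obtain x where "(w \<longlongrightarrow> (x, \<epsilon>)) (at_left s1)" unfolding imp_def by blast
      from tendsto_unique[OF trivial_limit_at_left_real this lim] have "sol (s1 - s0) = (x, \<epsilon>)" by simp
      then show False using sb by simp
    qed
    have ws1d: "(w has_vector_derivative vfield a b M (w s1)) (at s1)"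
      using H_noimp[OF Hw _ nimp1] s0 s1d d by simp
    then have cw: "isCont w s1" using has_vector_derivative_continuous by blast
    then have "(w \<longlongrightarrow> w s1) (at s1)" by (simp add: isCont_def)
    then have "(w \<longlongrightarrow> w s1) (at_left s1)" by (rule tendsto_within_subset) simp
    from tendsto_unique[OF trivial_limit_at_left_real this lim] have ws1: "w s1 = sol (s1 - s0)" .
    have P0ne: "dist (- k * \<epsilon>, \<epsilon>) (w s1) > 0"
    proof -
      have "(- k * \<epsilon>, \<epsilon>) \<noteq> w s1" using ws1 sb by (metis less_irrefl snd_conv)
      then show ?thesis by simp
    qed
    obtain e where e: "e > 0" "\<And>s. dist s s1 < e \<Longrightarrow> dist (w s) (w s1) < dist (- k * \<epsilon>, \<epsilon>) (w s1)"
      using cw P0ne unfolding continuous_at_eps_delta by blast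
    have s1nJ: "s1 \<notin> J" using nimp1 unfolding J_def by auto
    have "Inf J < s1 + e" using s1_def e by simp
    then obtain s where s: "s \<in> J" "s < s1 + e" using cInf_lessD[OF \<open>J \<noteq> {}\<close>] by blast
    have "s1 \<le> s" unfolding s1_def by (rule cInf_lower[OF s(1) bddJ])
    then have "dist s s1 < e" using s by (auto simp: dist_real_def)
    moreover have "w s = (- k * \<epsilon>, \<epsilon>)" using s H_imp[OF Hw] s0 unfolding J_def by auto
    ultimately show False using e(2)[of s] by (simp add: dist_commute)
  qed
  have ni: "\<not> imp w s" if "s0 < s" "s < s0 + T" for s
    using Jempty that unfolding J_def by auto
  have agreeT: "\<forall>t\<in>{s0..<s0 + T}. w t = sol (t - s0)"
    by (rule noimp_agree[OF Hw s0 ws0]) (use T ni in auto)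
  have "(w \<longlongrightarrow> sol T) (at_left (s0 + T))"
    using shift_left_lim[of "s0 + T" s0 w] T agreeT by simp
  moreover have "sol T = (fst (sol T), \<epsilon>)" using hit by (metis prod.collapse)
  ultimately have "imp w (s0 + T)" unfolding imp_def by metis
  then have "w (s0 + T) = (- k * \<epsilon>, \<epsilon>)" using H_imp[OF Hw] s0 T by auto
  moreover have "\<forall>r\<in>{0..<T}. w (s0 + r) = sol r" using agreeT by auto
  ultimately show ?thesis by simp
qed

end


context impact_sys begin

lemma unique:
  assumes Hw: "H w t0" and wt0: "w t0 = (- k * \<epsilon>, \<epsilon>)" and t: "t \<ge> 0"
  shows "w (t0 + t) = z t"
proof -
  have ind: "w (t0 + T * real n) = (- k * \<epsilon>, \<epsilon>) \<and> (\<forall>r\<in>{0..<T}. w (t0 + T * real n + r) = sol r)" for n :: nat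
  proof (induction n)
    case 0 show ?case using one_period[OF Hw _ wt0] wt0 by simp
  next
    case (Suc n)
    have s0: "t0 + T * real n \<ge> t0" using T by simp
    have P: "w (t0 + T * real n + T) = (- k * \<epsilon>, \<epsilon>)"
      using one_period[OF Hw s0 Suc.IH[THEN conjunct1]] by simp
    have eq: "t0 + T * real (Suc n) = t0 + T * real n + T" by (simp add: algebra_simps)
    have s0': "t0 + T * real (Suc n) \<ge> t0" using T by simp
    show ?case using one_period[OF Hw s0' P[folded eq]] P[folded eq] by simp
  qed
  obtain n r where nr: "t = T * of_int n + r" "0 \<le> r" "r < T" "z t = sol r" "n = \<lfloor>t / T\<rfloor>"
    by (rule fr_facts)
  have "n \<ge> 0" using nr(5) t T by simp
  then have rn: "real (nat n) = of_int n" by simp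
  have "w (t0 + T * real (nat n) + r) = sol r" using ind[of "nat n"] nr(2,3) by auto
  then show ?thesis using nr(1,4) rn by (simp add: add.assoc)
qed

lemma traj_H: "impact_traj a b k M \<epsilon> p w \<Longrightarrow> H w 0"
  unfolding impact_traj_def H_def imp_def impact_times_def by auto

lemma traj_imp: "impact_traj a b k M \<epsilon> p w \<Longrightarrow> w 0 = (if snd p = \<epsilon> then (- k * \<epsilon>, \<epsilon>) else p)"
  unfolding impact_traj_def by auto

theorem z_stable: "finite_time_stable a b k M \<epsilon> z"
proof -
  define gap where "gap = snd (sol tm) - \<epsilon>"
  have gap: "gap > 0" using above by (simp add: gap_def)
  define \<delta> where "\<delta> = min \<rho> gap * exp (- L * tm) / 2"
  have \<delta>0: "\<delta> > 0" using gap rho by (simp add: \<delta>_def)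
  have \<delta>s: "\<delta> * exp (L * tm) < min \<rho> gap"
  proof -
    have "\<delta> * exp (L * tm) = min \<rho> gap / 2"
      by (simp add: \<delta>_def exp_minus field_simps)
    moreover have "min \<rho> gap / 2 < min \<rho> gap" using gap rho by (simp add: min_def)
    ultimately show ?thesis by simp
  qed
  show ?thesis unfolding finite_time_stable_def
  proof (rule exI[of _ \<delta>], intro conjI \<delta>0 allI impI)
    fix p w assume pd: "infdist p (z ` {0..}) < \<delta>" and tr: "impact_traj a b k M \<epsilon> p w"
    have Hw: "H w 0" by (rule traj_H[OF tr])
    show "\<exists>t1\<ge>0. \<exists>s\<ge>0. \<forall>t\<ge>t1. w t = z (t + s)"
    proof (cases "\<exists>t1>0. imp w t1")
      case True
      then obtain t1 where t1: "t1 > 0" "imp w t1" by blast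
      have wt1: "w t1 = (- k * \<epsilon>, \<epsilon>)" using H_imp[OF Hw t1(1,2)] .
      have Ht1: "H w t1" using H_mono[OF Hw] t1 by simp
      define m where "m = \<lceil>t1 / T\<rceil>"
      have mT: "T * of_int m \<ge> t1" using ceiling_divide_upper[OF T(1), of t1]
        by (simp add: m_def mult.commute)
      have main: "\<forall>t\<ge>t1. w t = z (t + (T * of_int m - t1))"
      proof (intro allI impI)
        fix t assume t: "t \<ge> t1"
        have "w t = w (t1 + (t - t1))" by simp
        also have "\<dots> = z (t - t1)" using unique[OF Ht1 wt1, of "t - t1"] t by simp
        also have "\<dots> = z (t - t1 + T * of_int m)" by (rule z_per_int[symmetric])
        finally show "w t = z (t + (T * of_int m - t1))" by (simp add: algebra_simps)
      qed
      show ?thesis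
        apply (rule exI[of _ t1], rule conjI) using t1 apply simp
        apply (rule exI[of _ "T * of_int m - t1"], rule conjI) using mT apply simp
        using main by simp
    next
      case False
      note noimp = False
      show ?thesis
      proof (cases "snd p = \<epsilon>")
        case True
        then have w0: "w 0 = (- k * \<epsilon>, \<epsilon>)" using traj_imp[OF tr] by simp
        show ?thesis using unique[OF Hw w0] by (intro exI[of _ 0]) auto
      next
        case False
        then have w0: "w 0 = p" using traj_imp[OF tr] by simp
        have ne: "z ` {0..} \<noteq> {}" by auto
        obtain q where q: "q \<in> z ` {0..}" "dist p q < \<delta>"
          using pd ne unfolding infdist_notempty[OF ne]
          by (metis cINF_less_iff bdd_belowI2 zero_le_dist)
        then obtain \<tau>' where "q = z \<tau>'" by auto
        obtain n \<tau> where nr: "\<tau>' = T * of_int n + \<tau>" "0 \<le> \<tau>" "\<tau> < T" "z \<tau>' = sol \<tau>"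
          by (rule fr_facts)
        have dq: "dist (w 0) (sol \<tau>) \<le> \<delta>" using q nr(4) w0 \<open>q = z \<tau>'\<close> by simp
        have rd: "(w has_vector_derivative vfield a b M (w 0)) (at 0 within {0..})"
          using Hw unfolding H_def by auto
        have wd: "(w has_vector_derivative vfield a b M (w u)) (at u)" if "0 < u" for u
          using H_noimp[OF Hw that] noimp that by blast
        have wc: "continuous_on {0..tm - \<tau>} w"
        proof (rule cont_from_derivs[OF _ rd])
          show "0 \<le> tm - \<tau>" using nr T by simp
          fix u assume "0 < u" "u \<le> tm - \<tau>"
          then show "isCont w u" using wd has_vector_derivative_continuous by blast
        qed
        have sm: "\<delta> * exp (L * (tm - \<tau> - 0)) < \<rho>"
        proof -
          have "\<delta> * exp (L * (tm - \<tau> - 0)) \<le> \<delta> * exp (L * tm)"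
            using \<delta>0 Lpos nr(2) by (intro mult_left_mono) auto
          then show ?thesis using \<delta>s by simp
        qed
        have "\<forall>t\<in>{0..tm - \<tau>}. dist (w t) (sol (t - (0 - \<tau>))) \<le> \<delta> * exp (L * (t - 0))"
          by (rule cmp[OF _ _ _ wc _ dq sm]) (use nr T wd in auto)
        then have "dist (w (tm - \<tau>)) (sol (tm - \<tau> - (0 - \<tau>))) \<le> \<delta> * exp (L * (tm - \<tau> - 0))"
          using nr(2,3) T by (intro bspec[of _ _ "tm - \<tau>"]) auto
        then have "dist (w (tm - \<tau>)) (sol tm) \<le> \<delta> * exp (L * (tm - \<tau>))" by simp
        also have "\<dots> \<le> \<delta> * exp (L * tm)"
          using \<delta>0 Lpos nr(2) by (intro mult_left_mono) auto
        also have "\<dots> < gap" using \<delta>s by simp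
        finally have "dist (w (tm - \<tau>)) (sol tm) < gap" .
        moreover have "\<bar>snd (w (tm - \<tau>)) - snd (sol tm)\<bar> \<le> dist (w (tm - \<tau>)) (sol tm)"
          by (metis dist_real_def dist_snd_le)
        moreover have "snd (w (tm - \<tau>)) \<le> \<epsilon>" using Hw nr T unfolding H_def by auto
        ultimately show ?thesis using gap_def by linarith
      qed
    qed
  qed
qed

end


lemma gronwall_inh:
  fixes u u' :: "real \<Rightarrow> real \<times> real"
  assumes Tt: "0 \<le> Tt" and uc: "continuous_on {0..Tt} u" and u0: "u 0 = 0"
    and ud: "\<And>s. 0 < s \<Longrightarrow> s < Tt \<Longrightarrow> (u has_vector_derivative u' s) (at s)"
    and ub: "\<And>s. 0 < s \<Longrightarrow> s < Tt \<Longrightarrow> norm (u' s) \<le> \<nu> * norm (u s) + \<beta>"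
    and \<nu>: "\<nu> \<ge> 0" and \<beta>: "\<beta> \<ge> 0" and \<mu>: "\<mu> > 0"
    and t: "t \<in> {0..Tt}"
  shows "(norm (u t))\<^sup>2 \<le> \<beta> * \<mu> * t * exp ((2 * \<nu> + \<beta> / \<mu>) * t)"
proof -
  define K where "K = 2 * \<nu> + \<beta> / \<mu>"
  have K0: "K \<ge> 0" using \<nu> \<beta> \<mu> by (simp add: K_def)
  define h where "h s = inner (u s) (u s) * exp (- K * s) - \<beta> * \<mu> * s" for s
  have "h t \<le> h 0"
  proof (cases "t = 0")
    case False
    then have t0: "0 < t" using t by auto
    have hc: "continuous_on {0..t} h" unfolding h_def
      using t by (intro continuous_intros continuous_on_subset[OF uc]) auto
    have hd: "(h has_real_derivative
        (2 * inner (u s) (u' s) * exp (- K * s) + inner (u s) (u s) * (exp (- K * s) * (- K)) - \<beta> * \<mu>)) (at s)"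
      if "0 < s" "s < t" for s
    proof -
      have "(u has_vector_derivative u' s) (at s)" using ud that t by auto
      from inner_self_deriv[OF this] show ?thesis unfolding h_def
        by (auto intro!: derivative_eq_intros)
    qed
    have "\<And>x. 0 < x \<Longrightarrow> x < t \<Longrightarrow> h differentiable (at x)"
      using hd real_differentiable_def by blast
    from MVT[OF t0 hc this] obtain l s where s: "0 < s" "s < t" "DERIV h s :> l" "h t - h 0 = (t - 0) * l"
      by blast
    have l: "l = 2 * inner (u s) (u' s) * exp (- K * s) + inner (u s) (u s) * (exp (- K * s) * (- K)) - \<beta> * \<mu>"
      using DERIV_unique[OF s(3) hd[OF s(1,2)]] .
    define n where "n = norm (u s)"
    have g: "inner (u s) (u s) = n\<^sup>2" by (simp add: n_def power2_norm_eq_inner)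
    have "inner (u s) (u' s) \<le> n * norm (u' s)" unfolding n_def by (rule norm_cauchy_schwarz)
    also have "\<dots> \<le> n * (\<nu> * n + \<beta>)" using ub[of s] s t by (intro mult_left_mono) (auto simp: n_def)
    finally have i1: "2 * inner (u s) (u' s) \<le> 2 * \<nu> * n\<^sup>2 + 2 * \<beta> * n" by (simp add: algebra_simps power2_eq_square)
    have "2 * n * \<mu> \<le> n\<^sup>2 + \<mu>\<^sup>2" using sum_squares_bound[of n \<mu>] by (simp add: power2_eq_square algebra_simps)
    then have "2 * \<beta> * n * \<mu> \<le> \<beta> * (n\<^sup>2 + \<mu>\<^sup>2)" using \<beta> mult_left_mono by (fastforce simp: algebra_simps)
    then have "2 * \<beta> * n \<le> \<beta> * (n\<^sup>2 + \<mu>\<^sup>2) / \<mu>" using \<mu> by (simp add: field_simps)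
    also have "\<dots> = (\<beta> / \<mu>) * n\<^sup>2 + \<beta> * \<mu>" using \<mu> by (simp add: field_simps power2_eq_square)
    finally have "2 * inner (u s) (u' s) - K * n\<^sup>2 \<le> \<beta> * \<mu>" using i1 by (simp add: K_def algebra_simps)
    then have "(2 * inner (u s) (u' s) - K * n\<^sup>2) * exp (- K * s) \<le> \<beta> * \<mu> * exp (- K * s)"
      by (intro mult_right_mono) auto
    also have "\<dots> \<le> \<beta> * \<mu> * 1" using \<beta> \<mu> K0 s by (intro mult_left_mono) auto
    finally have "l \<le> 0" unfolding l g by (simp add: algebra_simps)
    then show ?thesis using s t0 mult_nonneg_nonpos[of t l] by simp
  qed simp
  then have "(norm (u t))\<^sup>2 * exp (- K * t) \<le> \<beta> * \<mu> * t"
    using u0 by (simp add: h_def power2_norm_eq_inner)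
  then have "(norm (u t))\<^sup>2 * exp (- K * t) * exp (K * t) \<le> \<beta> * \<mu> * t * exp (K * t)"
    by (intro mult_right_mono) auto
  then have "(norm (u t))\<^sup>2 \<le> \<beta> * \<mu> * t * exp (K * t)" by (simp add: mult.assoc exp_add[symmetric])
  then show ?thesis by (simp add: K_def)
qed


definition lin1 :: "real \<Rightarrow> real \<Rightarrow> real \<Rightarrow> real \<Rightarrow> real \<times> real" where
  "lin1 a b k t = (exp (a * t) * (- k * cos (b * t) - sin (b * t)), exp (a * t) * (cos (b * t) - k * sin (b * t)))"

definition Alin :: "real \<Rightarrow> real \<Rightarrow> real \<times> real \<Rightarrow> real \<times> real" where
  "Alin a b p = (a * fst p - b * snd p, b * fst p + a * snd p)"

lemma vfield_Alin: "vfield a b M p = Alin a b p + M p"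
  by (simp add: vfield_def Alin_def)

lemma lin1_0: "lin1 a b k 0 = (- k, 1)" by (simp add: lin1_def)

lemma lin1_deriv: "(lin1 a b k has_vector_derivative Alin a b (lin1 a b k t)) (at t within S)"
proof -
  have "((\<lambda>t. (exp (a * t) * (- k * cos (b * t) - sin (b * t)), exp (a * t) * (cos (b * t) - k * sin (b * t))))
     has_vector_derivative
     (a * exp (a * t) * (- k * cos (b * t) - sin (b * t)) + exp (a * t) * (k * b * sin (b * t) - b * cos (b * t)),
      a * exp (a * t) * (cos (b * t) - k * sin (b * t)) + exp (a * t) * (- b * sin (b * t) - k * b * cos (b * t))))
     (at t within S)"
  proof (intro has_vector_derivative_Pair)
    have "((\<lambda>t. exp (a * t) * (- k * cos (b * t) - sin (b * t))) has_real_derivative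
      a * exp (a * t) * (- k * cos (b * t) - sin (b * t)) + exp (a * t) * (k * b * sin (b * t) - b * cos (b * t))) (at t within S)"
      by (auto intro!: derivative_eq_intros simp: algebra_simps)
    then show "((\<lambda>t. exp (a * t) * (- k * cos (b * t) - sin (b * t))) has_vector_derivative
      a * exp (a * t) * (- k * cos (b * t) - sin (b * t)) + exp (a * t) * (k * b * sin (b * t) - b * cos (b * t))) (at t within S)"
      by (simp add: has_real_derivative_iff_has_vector_derivative)
    have "((\<lambda>t. exp (a * t) * (cos (b * t) - k * sin (b * t))) has_real_derivative
      a * exp (a * t) * (cos (b * t) - k * sin (b * t)) + exp (a * t) * (- b * sin (b * t) - k * b * cos (b * t))) (at t within S)"
      by (auto intro!: derivative_eq_intros simp: algebra_simps)
    then show "((\<lambda>t. exp (a * t) * (cos (b * t) - k * sin (b * t))) has_vector_derivative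
      a * exp (a * t) * (cos (b * t) - k * sin (b * t)) + exp (a * t) * (- b * sin (b * t) - k * b * cos (b * t))) (at t within S)"
      by (simp add: has_real_derivative_iff_has_vector_derivative)
  qed
  then show ?thesis unfolding lin1_def Alin_def by (simp add: algebra_simps)
qed

lemma norm_Alin: "norm (Alin a b p) = sqrt (a\<^sup>2 + b\<^sup>2) * norm p"
proof -
  have "(a * fst p - b * snd p)\<^sup>2 + (b * fst p + a * snd p)\<^sup>2 = (a\<^sup>2 + b\<^sup>2) * ((fst p)\<^sup>2 + (snd p)\<^sup>2)"
    by (simp add: algebra_simps power2_eq_square)
  then show ?thesis unfolding Alin_def norm_prod_def by (simp add: real_sqrt_mult)
qed

lemma Alin_diff: "Alin a b p - Alin a b q = Alin a b (p - q)"
  by (simp add: Alin_def algebra_simps)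

lemma norm_lin1: "norm (lin1 a b k t) = exp (a * t) * sqrt (1 + k\<^sup>2)"
proof -
  have "(exp (a * t) * (- k * cos (b * t) - sin (b * t)))\<^sup>2 + (exp (a * t) * (cos (b * t) - k * sin (b * t)))\<^sup>2
      = (exp (a * t))\<^sup>2 * ((1 + k\<^sup>2) * ((sin (b * t))\<^sup>2 + (cos (b * t))\<^sup>2))"
    by algebra
  also have "\<dots> = (exp (a * t))\<^sup>2 * (1 + k\<^sup>2)" by simp
  finally show ?thesis unfolding lin1_def norm_prod_def by (simp add: real_sqrt_mult)
qed

lemma lin_hit:
  fixes a b k :: real
  assumes "a < 0" and "b > 0" and "k > 0"
    and hyp: "(a / b) * (3 * pi / 2) - (a / b) * arccot (- k) + ln (1 + k\<^sup>2) / 2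
         > (a / b) * (- pi / 2) - (a / b) * arccot (- a / b) + ln (1 + a\<^sup>2 / b\<^sup>2) / 2"
  shows "\<exists>tm>0. snd (lin1 a b k tm) > 1"
proof -
  define c where "c = - a / b"
  have c0: "c > 0" using assms by (simp add: c_def divide_neg_pos)
  define \<alpha> where "\<alpha> = arctan c"
  define \<beta> where "\<beta> = arctan k"
  have \<alpha>: "\<alpha> < pi / 2" using arctan_ubound by (simp add: \<alpha>_def)
  have \<beta>: "\<beta> < pi / 2" using arctan_ubound by (simp add: \<beta>_def)
  define tm where "tm = (2 * pi - \<alpha> - \<beta>) / b"
  have tm0: "tm > 0" using \<alpha> \<beta> assms pi_gt3 by (simp add: tm_def)
  have btm: "b * tm = 2 * pi - (\<alpha> + \<beta>)" using assms by (simp add: tm_def)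
  define Ca where "Ca = 1 / sqrt (1 + c\<^sup>2)"
  define Cb where "Cb = 1 / sqrt (1 + k\<^sup>2)"
  have ca: "cos \<alpha> = Ca" "sin \<alpha> = c * Ca" by (simp_all add: \<alpha>_def Ca_def cos_arctan sin_arctan)
  have cb: "cos \<beta> = Cb" "sin \<beta> = k * Cb" by (simp_all add: \<beta>_def Cb_def cos_arctan sin_arctan)
  have "cos (b * tm) - k * sin (b * tm) = cos (\<alpha> + \<beta>) + k * sin (\<alpha> + \<beta>)"
    unfolding btm by (simp add: cos_diff sin_diff)
  also have "\<dots> = Ca * Cb * (1 + k\<^sup>2)"
    by (simp add: cos_add sin_add ca cb algebra_simps power2_eq_square)
  also have "\<dots> = Ca * sqrt (1 + k\<^sup>2)"
  proof -
    have "Cb * (1 + k\<^sup>2) = (1 + k\<^sup>2) / sqrt (1 + k\<^sup>2)" by (simp add: Cb_def)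
    also have "\<dots> = sqrt (1 + k\<^sup>2)" by (rule real_div_sqrt) simp
    finally show ?thesis by (simp add: mult.assoc)
  qed
  finally have Y: "snd (lin1 a b k tm) = exp (a * tm) * sqrt (1 + k\<^sup>2) / sqrt (1 + c\<^sup>2)"
    by (simp add: lin1_def Ca_def)
  have ac1: "arccot (- k) = pi / 2 + \<beta>" by (simp add: arccot_def \<beta>_def arctan_minus)
  have ac2: "arccot (- a / b) = pi / 2 - \<alpha>" by (simp add: arccot_def \<alpha>_def c_def)
  have c2: "a\<^sup>2 / b\<^sup>2 = c\<^sup>2" by (simp add: c_def power_divide)
  have atm: "a * tm = (a / b) * (2 * pi - \<alpha> - \<beta>)" by (simp add: tm_def)
  from hyp have pos: "a * tm + ln (1 + k\<^sup>2) / 2 - ln (1 + c\<^sup>2) / 2 > 0"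
    unfolding ac1 ac2 c2 atm by (simp add: algebra_simps add_divide_distrib)
  have esq: "exp (ln x / 2) = sqrt x" if "x > 0" for x :: real
  proof -
    have "x powr (1/2) = exp (ln x / 2)" using that by (simp add: powr_def)
    then show ?thesis using powr_half_sqrt[of x] that by simp
  qed
  have e1: "exp (ln (1 + k\<^sup>2) / 2) = sqrt (1 + k\<^sup>2)"
    by (rule esq) (simp add: add_pos_nonneg)
  have e2: "exp (ln (1 + c\<^sup>2) / 2) = sqrt (1 + c\<^sup>2)"
    by (rule esq) (simp add: add_pos_nonneg)
  have "exp (a * tm + ln (1 + k\<^sup>2) / 2 - ln (1 + c\<^sup>2) / 2) = exp (a * tm) * sqrt (1 + k\<^sup>2) / sqrt (1 + c\<^sup>2)"
    by (simp add: exp_add exp_diff e1 e2)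
  moreover have "exp (a * tm + ln (1 + k\<^sup>2) / 2 - ln (1 + c\<^sup>2) / 2) > 1" using pos by simp
  ultimately show ?thesis using Y tm0 by auto
qed


lemma M_small:
  fixes M :: "real \<times> real \<Rightarrow> real \<times> real"
  assumes "M 0 = 0" "(M has_derivative (\<lambda>h. 0)) (at 0)" "\<eta> > 0"
  shows "\<exists>r>0. \<forall>p. norm p \<le> r \<longrightarrow> norm (M p) \<le> \<eta> * norm p"
proof -
  from assms(2)[unfolded has_derivative_at_alt] assms(3)
  obtain d where d: "d > 0" "\<forall>y. norm (y - 0) < d \<longrightarrow> norm (M y - M 0 - 0) \<le> \<eta> * norm (y - 0)"
    by blast
  show ?thesis using d assms(1) by (intro exI[of _ "d/2"]) auto
qed

lemma M_lip:
  fixes M :: "real \<times> real \<Rightarrow> real \<times> real"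
  assumes "C2_map M"
  shows "\<exists>LM>0. \<forall>x\<in>cball 0 1. \<forall>y\<in>cball 0 1. norm (M x - M y) \<le> LM * norm (x - y)"
proof -
  from assms obtain DM D2M where
    d1: "\<And>x. (M has_derivative blinfun_apply (DM x)) (at x)" and
    d2: "\<And>x. (DM has_derivative blinfun_apply (D2M x)) (at x)"
    unfolding C2_map_def by blast
  have "continuous_on (cball 0 1) DM"
    using d2 has_derivative_continuous continuous_at_imp_continuous_on by blast
  then have "compact (DM ` cball 0 1)" by (intro compact_continuous_image) auto
  then have "bounded (DM ` cball 0 1)" by (rule compact_imp_bounded)
  then obtain B where "\<forall>x\<in>DM ` cball 0 1. norm x \<le> B" unfolding bounded_iff by blast
  then have B: "\<And>x. x \<in> cball 0 1 \<Longrightarrow> norm (DM x) \<le> B" by blast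
  have "norm (DM 0) \<le> B" using B[of 0] by simp
  then have B0: "B \<ge> 0" using norm_ge_zero[of "DM 0"] by linarith
  have "norm (M x - M y) \<le> B * norm (x - y)" if "x \<in> cball 0 1" "y \<in> cball 0 1" for x y
  proof (rule differentiable_bound[of "cball 0 1" M "\<lambda>x. blinfun_apply (DM x)"])
    show "convex (cball (0::real\<times>real) 1)" by simp
    show "(M has_derivative blinfun_apply (DM x)) (at x within cball 0 1)" for x
      using d1 by (rule has_derivative_at_withinI)
    show "onorm (blinfun_apply (DM x)) \<le> B" if "x \<in> cball 0 1" for x
      using B[OF that] by (simp add: norm_blinfun.rep_eq)
  qed (use that in auto)
  moreover have "B * norm (x - y) \<le> (B + 1) * norm (x - y)" for x y :: "real \<times> real"
    by (intro mult_right_mono) auto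
  ultimately have "\<forall>x\<in>cball 0 1. \<forall>y\<in>cball 0 1. norm (M x - M y) \<le> (B + 1) * norm (x - y)"
    using order_trans by blast
  then show ?thesis using B0 by (intro exI[of _ "B + 1"]) auto
qed


lemma exists_orbit:
  fixes a b k :: real and M :: "real \<times> real \<Rightarrow> real \<times> real"
  assumes a: "a < 0" and b: "b > 0" and k: "k > 0"
    and LM: "LM > 0" and lipM: "\<forall>x\<in>cball 0 1. \<forall>y\<in>cball 0 1. norm (M x - M y) \<le> LM * norm (x - y)"
    and tm: "tm > 0" and Ym: "snd (lin1 a b k tm) > 1"
    and \<eta>: "\<eta> > 0" and r: "r > 0" and small: "\<forall>p. norm p \<le> r \<longrightarrow> norm (M p) \<le> \<eta> * norm p"
    and h1: "2 * \<eta> * sqrt (1 + k\<^sup>2) \<le> 1"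
    and h2: "2 * \<eta> * sqrt (1 + k\<^sup>2) * tm * exp ((2 * sqrt (a\<^sup>2 + b\<^sup>2) + 1) * tm)
               \<le> (min (1/2) ((snd (lin1 a b k tm) - 1) / 2))\<^sup>2"
    and h3: "\<eta> * sqrt (1 + k\<^sup>2) < b * k - a"
    and eps: "\<epsilon> > 0" and epsr: "2 * sqrt (1 + k\<^sup>2) * \<epsilon> \<le> min r 1"
  shows "\<exists>z T. periodic_one_impact a b k M \<epsilon> z T \<and> finite_time_stable a b k M \<epsilon> z \<and>
           (\<forall>t. norm (z t) \<le> 2 * sqrt (1 + k\<^sup>2) * \<epsilon>)"
proof -
  define K0 where "K0 = sqrt (1 + k\<^sup>2)"
  define \<nu> where "\<nu> = sqrt (a\<^sup>2 + b\<^sup>2)"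
  define \<gamma> where "\<gamma> = min (1/2) ((snd (lin1 a b k tm) - 1) / 2)"
  have K0: "K0 \<ge> 1" unfolding K0_def by simp
  have \<nu>0: "\<nu> \<ge> 0" unfolding \<nu>_def by simp
  have \<gamma>0: "\<gamma> > 0" "\<gamma> \<le> 1/2" "\<gamma> < snd (lin1 a b k tm) - 1" using Ym by (auto simp: \<gamma>_def min_def)
  define R where "R = 2 * K0 * \<epsilon>"
  have epsr': "2 * K0 * \<epsilon> \<le> min r 1" using epsr by (simp add: K0_def)
  have "R > 0" using eps K0 by (simp add: R_def)
  then have R: "R > 0" "R \<le> r" "R \<le> 1" using epsr' by (auto simp: R_def)
  define B where "B = cball (0::real \<times> real) R"
  have Bc: "closed B" "convex B" "B \<noteq> {}" using R by (auto simp: B_def)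
  define pr where "pr = closest_point B"
  have pr_in: "pr x \<in> B" for x unfolding pr_def by (rule closest_point_in_set[OF Bc(1,3)])
  have pr_id: "x \<in> B \<Longrightarrow> pr x = x" for x unfolding pr_def by (rule closest_point_self)
  have pr_lip: "dist (pr x) (pr y) \<le> dist x y" for x y
    unfolding pr_def by (rule closest_point_lipschitz[OF Bc(2,1,3)])
  have pr_norm: "norm (pr x) \<le> R" for x using pr_in[of x] by (simp add: B_def)
  define F where "F p = vfield a b M (pr p)" for p
  define L where "L = \<nu> + LM"
  have L0: "L > 0" using \<nu>0 LM by (simp add: L_def)
  have lipF: "\<forall>x y. dist (F x) (F y) \<le> L * dist x y"
  proof (intro allI)
    fix x y
    have "F x - F y = Alin a b (pr x - pr y) + (M (pr x) - M (pr y))"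
      by (simp add: F_def vfield_Alin Alin_diff[symmetric] algebra_simps)
    then have "norm (F x - F y) \<le> norm (Alin a b (pr x - pr y)) + norm (M (pr x) - M (pr y))"
      by (simp add: norm_triangle_ineq)
    also have "norm (Alin a b (pr x - pr y)) = \<nu> * norm (pr x - pr y)" by (simp add: norm_Alin \<nu>_def)
    also have "norm (M (pr x) - M (pr y)) \<le> LM * norm (pr x - pr y)"
      using lipM pr_norm[of x] pr_norm[of y] R by auto
    finally have "norm (F x - F y) \<le> L * norm (pr x - pr y)" by (simp add: L_def algebra_simps)
    also have "\<dots> \<le> L * norm (x - y)" using pr_lip[of x y] L0 by (simp add: dist_norm)
    finally show "dist (F x) (F y) \<le> L * dist x y" by (simp add: dist_norm)
  qed
  define P0 where "P0 = (- k * \<epsilon>, \<epsilon>)"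
  obtain sol where sol0: "sol 0 = P0"
    and sold: "\<And>t. t \<in> {0..tm} \<Longrightarrow> (sol has_vector_derivative F (sol t)) (at t within {0..tm})"
    using picard[OF lipF L0, of tm P0] tm by auto
  have sol_cont: "continuous_on {0..tm} sol"
    using sold by (meson continuous_on_eq_continuous_within has_vector_derivative_continuous)
  have sol_at: "(sol has_vector_derivative F (sol t)) (at t)" if "0 < t" "t < tm" for t
  proof -
    have "(sol has_vector_derivative F (sol t)) (at t within {0..tm})" using sold that by simp
    then have "(sol has_vector_derivative F (sol t)) (at t within {0<..<tm})"
      by (rule has_vector_derivative_within_subset) auto
    then show ?thesis by (subst (asm) has_vector_derivative_within_open) (use that in auto)
  qed
  have lin_norm: "norm (\<epsilon> *\<^sub>R lin1 a b k t) \<le> \<epsilon> * K0" if "t \<ge> 0" for t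
  proof -
    have "exp (a * t) \<le> 1" using a that by (simp add: mult_nonpos_nonneg)
    then have "exp (a * t) * K0 \<le> 1 * K0" using K0 by (intro mult_right_mono) auto
    then have "\<epsilon> * (exp (a * t) * K0) \<le> \<epsilon> * K0" using eps by (intro mult_left_mono) auto
    then show ?thesis using eps by (simp add: norm_lin1 K0_def[symmetric])
  qed
  have lin_B: "\<epsilon> *\<^sub>R lin1 a b k t \<in> B" if "t \<ge> 0" for t
  proof -
    have "norm (\<epsilon> *\<^sub>R lin1 a b k t) \<le> \<epsilon> * K0" using lin_norm that .
    also have "\<dots> \<le> R" using eps K0 by (simp add: R_def)
    finally show ?thesis by (simp add: B_def)
  qed
  define u where "u t = sol t - \<epsilon> *\<^sub>R lin1 a b k t" for t
  define u' where "u' t = F (sol t) - \<epsilon> *\<^sub>R Alin a b (lin1 a b k t)" for t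
  have ubound: "norm (u t) \<le> \<gamma> * \<epsilon>" if t: "t \<in> {0..tm}" for t
  proof -
    have "(norm (u t))\<^sup>2 \<le> (\<eta> * R) * \<epsilon> * t * exp ((2 * \<nu> + (\<eta> * R) / \<epsilon>) * t)"
    proof (rule gronwall_inh[of tm u u' \<nu> "\<eta> * R" \<epsilon> t])
      show "0 \<le> tm" using tm by simp
      show "continuous_on {0..tm} u" unfolding u_def lin1_def
        by (intro continuous_intros sol_cont)
      show "u 0 = 0" by (simp add: u_def sol0 P0_def lin1_0 zero_prod_def)
      show "(u has_vector_derivative u' s) (at s)" if "0 < s" "s < tm" for s
      proof -
        have "((\<lambda>x. \<epsilon> *\<^sub>R lin1 a b k x) has_vector_derivative \<epsilon> *\<^sub>R Alin a b (lin1 a b k s)) (at s)"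
          using has_vector_derivative_scaleR[OF DERIV_const lin1_deriv] by simp
        then show ?thesis unfolding u_def u'_def by (intro derivative_intros sol_at[OF that])
      qed
      show "norm (u' s) \<le> \<nu> * norm (u s) + \<eta> * R" if "0 < s" "s < tm" for s
      proof -
        have lB: "pr (\<epsilon> *\<^sub>R lin1 a b k s) = \<epsilon> *\<^sub>R lin1 a b k s" using lin_B[of s] that pr_id by simp
        have "u' s = Alin a b (pr (sol s) - \<epsilon> *\<^sub>R lin1 a b k s) + M (pr (sol s))"
          by (simp add: u'_def F_def vfield_Alin Alin_diff[symmetric] Alin_def algebra_simps)
        then have "norm (u' s) \<le> norm (Alin a b (pr (sol s) - \<epsilon> *\<^sub>R lin1 a b k s)) + norm (M (pr (sol s)))"
          by (simp add: norm_triangle_ineq)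
        also have "norm (Alin a b (pr (sol s) - \<epsilon> *\<^sub>R lin1 a b k s)) = \<nu> * dist (pr (sol s)) (pr (\<epsilon> *\<^sub>R lin1 a b k s))"
          by (simp add: norm_Alin \<nu>_def lB dist_norm)
        also have "\<dots> \<le> \<nu> * norm (u s)" using pr_lip \<nu>0 by (simp add: u_def dist_norm mult_left_mono)
        also have "norm (M (pr (sol s))) \<le> \<eta> * norm (pr (sol s))"
          using small[rule_format, of "pr (sol s)"] pr_norm[of "sol s"] R by linarith
        also have "\<dots> \<le> \<eta> * R" using pr_norm \<eta> by (simp add: mult_left_mono)
        finally show ?thesis by simp
      qed
    qed (use \<nu>0 \<eta> R eps t in auto)
    also have "\<dots> = 2 * \<eta> * K0 * \<epsilon>\<^sup>2 * t * exp ((2 * \<nu> + 2 * \<eta> * K0) * t)"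
      using eps by (simp add: R_def power2_eq_square)
    also have "\<dots> \<le> 2 * \<eta> * K0 * \<epsilon>\<^sup>2 * tm * exp ((2 * \<nu> + 1) * tm)"
    proof -
      have "exp ((2 * \<nu> + 2 * \<eta> * K0) * t) \<le> exp ((2 * \<nu> + 1) * tm)"
        using h1 t \<nu>0 \<eta> K0 unfolding K0_def[symmetric]
        by (intro exp_mono mult_mono) auto
      then show ?thesis using t \<eta> K0 eps by (intro mult_mono mult_left_mono) auto
    qed
    also have "\<dots> = \<epsilon>\<^sup>2 * (2 * \<eta> * K0 * tm * exp ((2 * \<nu> + 1) * tm))" by (simp add: algebra_simps)
    also have "\<dots> \<le> \<epsilon>\<^sup>2 * \<gamma>\<^sup>2" using h2 unfolding K0_def[symmetric] \<nu>_def[symmetric] \<gamma>_def[symmetric]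
      by (intro mult_left_mono) auto
    also have "\<dots> = (\<gamma> * \<epsilon>)\<^sup>2" by (simp add: power_mult_distrib)
    finally have "(norm (u t))\<^sup>2 \<le> (\<gamma> * \<epsilon>)\<^sup>2" .
    then show ?thesis by (rule power2_le_imp_le) (use \<gamma>0 eps in simp)
  qed
  have solnorm: "norm (sol t) \<le> 3 / 2 * K0 * \<epsilon>" if "t \<in> {0..tm}" for t
  proof -
    have "norm (sol t) \<le> norm (\<epsilon> *\<^sub>R lin1 a b k t) + norm (u t)"
      unfolding u_def by (metis norm_triangle_sub add.commute)
    also have "norm (\<epsilon> *\<^sub>R lin1 a b k t) \<le> \<epsilon> * K0" using lin_norm that by simp
    also have "norm (u t) \<le> \<gamma> * \<epsilon>" by (rule ubound[OF that])
    also have "\<gamma> * \<epsilon> \<le> 1/2 * K0 * \<epsilon>" using \<gamma>0 K0 eps by (intro mult_right_mono) auto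
    finally show ?thesis by (simp add: algebra_simps)
  qed
  define \<rho> where "\<rho> = K0 * \<epsilon> / 4"
  have \<rho>0: "\<rho> > 0" using K0 eps by (simp add: \<rho>_def)
  have agree: "vfield a b M x = F x" if "t \<in> {0..tm}" "dist x (sol t) < \<rho>" for t x
  proof -
    have "norm x \<le> norm (sol t) + dist x (sol t)" by (metis dist_norm norm_triangle_sub add.commute)
    also have "\<dots> \<le> 3 / 2 * K0 * \<epsilon> + \<rho>" using solnorm[OF that(1)] that(2) by simp
    also have "\<dots> \<le> R" using K0 eps by (simp add: \<rho>_def R_def)
    finally have "x \<in> B" by (simp add: B_def)
    then show ?thesis by (simp add: F_def pr_id)
  qed
  have F_sol: "F (sol t) = vfield a b M (sol t)" if "t \<in> {0..tm}" for t
    using agree[OF that, of "sol t"] \<rho>0 by simp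
  have above: "snd (sol tm) > \<epsilon>"
  proof -
    have "\<bar>snd (sol tm) - snd (\<epsilon> *\<^sub>R lin1 a b k tm)\<bar> \<le> norm (u tm)"
      unfolding u_def by (metis dist_norm dist_real_def dist_snd_le)
    then have "snd (sol tm) \<ge> \<epsilon> * snd (lin1 a b k tm) - \<gamma> * \<epsilon>" using ubound[of tm] tm by simp
    moreover have "\<epsilon> * snd (lin1 a b k tm) - \<gamma> * \<epsilon> > \<epsilon>"
    proof -
      have "\<epsilon> * (snd (lin1 a b k tm) - \<gamma>) > \<epsilon> * 1" using \<gamma>0 eps by (intro mult_strict_left_mono) auto
      then show ?thesis by (simp add: algebra_simps)
    qed
    ultimately show ?thesis by simp
  qed
  have negd: "snd (vfield a b M (- k * \<epsilon>, \<epsilon>)) < 0"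
  proof -
    have nP: "norm P0 = \<epsilon> * K0"
    proof -
      have "norm P0 = sqrt ((k * \<epsilon>)\<^sup>2 + \<epsilon>\<^sup>2)" by (simp add: P0_def norm_prod_def)
      also have "(k * \<epsilon>)\<^sup>2 + \<epsilon>\<^sup>2 = \<epsilon>\<^sup>2 * (1 + k\<^sup>2)" by (simp add: algebra_simps power2_eq_square)
      finally show ?thesis using eps by (simp add: K0_def real_sqrt_mult)
    qed
    have "\<epsilon> * K0 \<le> 2 * K0 * \<epsilon>" using eps K0 by (simp add: algebra_simps)
    then have "norm P0 \<le> r" using nP R(2) unfolding R_def by linarith
    then have "norm (M P0) \<le> \<eta> * (\<epsilon> * K0)" using small[rule_format, of P0] nP by simp
    moreover have "\<bar>snd (M P0)\<bar> \<le> norm (M P0)" using norm_snd_le[of "snd (M P0)" "fst (M P0)"] by simp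
    moreover have "snd (vfield a b M P0) = b * (- k * \<epsilon>) + a * \<epsilon> + snd (M P0)"
      by (simp add: vfield_def P0_def)
    moreover have "\<eta> * (\<epsilon> * K0) < \<epsilon> * (b * k - a)" using h3 eps unfolding K0_def[symmetric]
      by (simp add: mult.commute mult.left_commute)
    ultimately show ?thesis unfolding P0_def by (simp add: algebra_simps)
  qed
  have sd0: "((\<lambda>t. snd (sol t)) has_real_derivative snd (vfield a b M (- k * \<epsilon>, \<epsilon>))) (at 0 within {0..tm})"
    using snd_deriv[OF sold[of 0]] tm F_sol[of 0] sol0 by (simp add: P0_def)
  from has_real_derivative_neg_dec_right[OF sd0 negd]
  obtain d where d: "d > 0" "\<And>h. h > 0 \<Longrightarrow> h \<le> tm \<Longrightarrow> h < d \<Longrightarrow> snd (sol h) < \<epsilon>"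
    using sol0 by (auto simp: P0_def)
  define t0 where "t0 = min (d / 2) (tm / 2)"
  have t0: "0 < t0" "t0 < d" "t0 < tm" using d tm by (auto simp: t0_def)
  define Sh where "Sh = {t0..tm} \<inter> (\<lambda>s. snd (sol s)) -` {\<epsilon>..}"
  have sndc: "continuous_on {0..tm} (\<lambda>s. snd (sol s))" by (intro continuous_intros sol_cont)
  have Shc: "closed Sh" unfolding Sh_def
    by (rule continuous_closed_preimage) (use sndc t0 in \<open>auto intro: continuous_on_subset\<close>)
  have tmSh: "tm \<in> Sh" using above t0 by (simp add: Sh_def)
  have Shb: "bdd_below Sh" unfolding Sh_def bdd_below_def by auto
  define T where "T = Inf Sh"
  have TSh: "T \<in> Sh" unfolding T_def using closed_contains_Inf[OF _ Shb Shc] tmSh by blast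
  have Tle: "T \<le> tm" unfolding T_def by (rule cInf_lower[OF tmSh Shb])
  have Tt0: "t0 \<le> T" using TSh by (simp add: Sh_def)
  have below: "snd (sol s) < \<epsilon>" if "0 < s" "s < T" for s
  proof (cases "s < d")
    case True then show ?thesis using d(2)[of s] that Tle by simp
  next
    case False
    then have "s \<ge> t0" using t0 by simp
    moreover have "s \<notin> Sh"
    proof
      assume "s \<in> Sh" then have "T \<le> s" unfolding T_def by (rule cInf_lower[OF _ Shb])
      then show False using that by simp
    qed
    ultimately show ?thesis using that Tle by (auto simp: Sh_def)
  qed
  have hitge: "snd (sol T) \<ge> \<epsilon>" using TSh by (simp add: Sh_def)
  have hitle: "snd (sol T) \<le> \<epsilon>"
  proof (rule cont_le_left[of "t0 / 2" T "\<lambda>s. snd (sol s)"])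
    show "t0 / 2 < T" using t0 Tt0 by simp
    show "continuous_on {t0 / 2..T} (\<lambda>s. snd (sol s))"
      by (rule continuous_on_subset[OF sndc]) (use t0 Tle in auto)
    show "\<forall>s\<in>{t0 / 2..<T}. snd (sol s) \<le> \<epsilon>" using below t0 by (auto intro: less_imp_le)
  qed
  have hit: "snd (sol T) = \<epsilon>" using hitge hitle by simp
  have TT: "0 < T" "T < tm" using t0 Tt0 Tle hit above by (auto simp: less_le)
  interpret impact_sys a b k M \<epsilon> sol T tm L \<rho> F
    by (unfold_locales) (use eps L0 \<rho>0 TT sol0 sold lipF agree below hit above negd in \<open>auto simp: P0_def\<close>)
  have zn: "norm (z t) \<le> 2 * sqrt (1 + k\<^sup>2) * \<epsilon>" for t
  proof -
    obtain n r where nr: "t = T * of_int n + r" "0 \<le> r" "r < T" "z t = sol r" by (rule fr_facts)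
    have "norm (sol r) \<le> 3 / 2 * K0 * \<epsilon>" using solnorm nr TT by auto
    also have "\<dots> \<le> 2 * K0 * \<epsilon>" using K0 eps by simp
    finally show ?thesis using nr by (simp add: K0_def)
  qed
  show ?thesis using z_periodic z_stable zn by blast
qed


theorem mainTheorem3:
  fixes a b k :: real and M :: "real \<times> real \<Rightarrow> real \<times> real"
  assumes "a < 0" and "b > 0" and "k > 0"
    and "C2_map M" and "M 0 = 0" and "(M has_derivative (\<lambda>h. 0)) (at 0)"
    and "(a / b) * (3 * pi / 2) - (a / b) * arccot (- k) + ln (1 + k\<^sup>2) / 2
         > (a / b) * (- pi / 2) - (a / b) * arccot (- a / b) + ln (1 + a\<^sup>2 / b\<^sup>2) / 2"
  shows "\<exists>\<epsilon>0>0. \<exists>zs :: real \<Rightarrow> real \<Rightarrow> real \<times> real. \<exists>Ts :: real \<Rightarrow> real.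
           (\<forall>\<epsilon>. 0 < \<epsilon> \<and> \<epsilon> < \<epsilon>0 \<longrightarrow>
               periodic_one_impact a b k M \<epsilon> (zs \<epsilon>) (Ts \<epsilon>) \<and>
               finite_time_stable a b k M \<epsilon> (zs \<epsilon>)) \<and>
           (\<forall>\<eta>>0. \<exists>\<epsilon>1>0. \<forall>\<epsilon>. 0 < \<epsilon> \<and> \<epsilon> < \<epsilon>1 \<and> \<epsilon> < \<epsilon>0 \<longrightarrow>
               (\<forall>t\<ge>0. norm (zs \<epsilon> t) \<le> \<eta>))"
proof -
  note a = assms(1) and b = assms(2) and k = assms(3)
  obtain tm where tm: "tm > 0" "snd (lin1 a b k tm) > 1" using lin_hit[OF a b k assms(7)] by blast
  obtain LM where LM: "LM > 0" "\<forall>x\<in>cball 0 1. \<forall>y\<in>cball 0 1. norm (M x - M y) \<le> LM * norm (x - y)"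
    using M_lip[OF assms(4)] by blast
  define K0 where "K0 = sqrt (1 + k\<^sup>2)"
  define \<nu> where "\<nu> = sqrt (a\<^sup>2 + b\<^sup>2)"
  define \<gamma> where "\<gamma> = min (1/2) ((snd (lin1 a b k tm) - 1) / 2)"
  define E where "E = exp ((2 * \<nu> + 1) * tm)"
  have K0: "K0 \<ge> 1" unfolding K0_def by simp
  have \<gamma>0: "\<gamma> > 0" using tm by (simp add: \<gamma>_def)
  have E0: "E > 0" by (simp add: E_def)
  have "b * k > 0" using b k by simp
  then have bka: "b * k - a > 0" using a by simp
  define \<eta> where "\<eta> = min (1 / (2 * K0)) (min (\<gamma>\<^sup>2 / (2 * K0 * tm * E)) ((b * k - a) / (2 * K0)))"
  have \<eta>0: "\<eta> > 0" using K0 \<gamma>0 tm E0 bka by (simp add: \<eta>_def)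
  have h1: "2 * \<eta> * K0 \<le> 1"
  proof -
    have "\<eta> \<le> 1 / (2 * K0)" by (simp add: \<eta>_def)
    then have "\<eta> * (2 * K0) \<le> 1 / (2 * K0) * (2 * K0)" using K0 by (intro mult_right_mono) auto
    then show ?thesis using K0 by (simp add: algebra_simps)
  qed
  have h2: "2 * \<eta> * K0 * tm * E \<le> \<gamma>\<^sup>2"
  proof -
    have p: "2 * K0 * tm * E > 0" using K0 tm E0 by simp
    have "\<eta> \<le> \<gamma>\<^sup>2 / (2 * K0 * tm * E)" by (simp add: \<eta>_def)
    then have "\<eta> * (2 * K0 * tm * E) \<le> \<gamma>\<^sup>2 / (2 * K0 * tm * E) * (2 * K0 * tm * E)"
      using p by (intro mult_right_mono) auto
    moreover have "\<gamma>\<^sup>2 / (2 * K0 * tm * E) * (2 * K0 * tm * E) = \<gamma>\<^sup>2"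
      using E0 K0 tm by simp
    moreover have "2 * \<eta> * K0 * tm * E = \<eta> * (2 * K0 * tm * E)" by (simp add: algebra_simps)
    ultimately show ?thesis by simp
  qed
  have h3: "\<eta> * K0 < b * k - a"
  proof -
    have "\<eta> \<le> (b * k - a) / (2 * K0)" by (simp add: \<eta>_def)
    then have "\<eta> * K0 \<le> (b * k - a) / (2 * K0) * K0" using K0 by (intro mult_right_mono) auto
    also have "\<dots> = (b * k - a) / 2" using K0 by (simp add: field_simps)
    finally show ?thesis using bka by simp
  qed
  obtain r where r: "r > 0" "\<forall>p. norm p \<le> r \<longrightarrow> norm (M p) \<le> \<eta> * norm p"
    using M_small[OF assms(5,6) \<eta>0] by blast
  define \<epsilon>0 where "\<epsilon>0 = min r 1 / (2 * K0)"
  have \<epsilon>0: "\<epsilon>0 > 0" using r K0 by (simp add: \<epsilon>0_def)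
  have ex: "\<forall>\<epsilon>. \<exists>zT. 0 < \<epsilon> \<and> \<epsilon> < \<epsilon>0 \<longrightarrow>
     periodic_one_impact a b k M \<epsilon> (fst zT) (snd zT) \<and> finite_time_stable a b k M \<epsilon> (fst zT) \<and>
     (\<forall>t. norm (fst zT t) \<le> 2 * K0 * \<epsilon>)"
  proof
    fix \<epsilon> :: real
    show "\<exists>zT. 0 < \<epsilon> \<and> \<epsilon> < \<epsilon>0 \<longrightarrow>
     periodic_one_impact a b k M \<epsilon> (fst zT) (snd zT) \<and> finite_time_stable a b k M \<epsilon> (fst zT) \<and>
     (\<forall>t. norm (fst zT t) \<le> 2 * K0 * \<epsilon>)"
    proof (cases "0 < \<epsilon> \<and> \<epsilon> < \<epsilon>0")
      case True
      have "2 * K0 * \<epsilon> \<le> 2 * K0 * \<epsilon>0" using True K0 by simp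
      also have "\<dots> = min r 1" using K0 by (simp add: \<epsilon>0_def)
      finally have epsr: "2 * sqrt (1 + k\<^sup>2) * \<epsilon> \<le> min r 1" by (simp add: K0_def)
      have "\<exists>z T. periodic_one_impact a b k M \<epsilon> z T \<and> finite_time_stable a b k M \<epsilon> z \<and>
           (\<forall>t. norm (z t) \<le> 2 * sqrt (1 + k\<^sup>2) * \<epsilon>)"
        by (rule exists_orbit[OF a b k LM tm \<eta>0 r])
           (use h1 h2 h3 True epsr in \<open>simp_all add: K0_def \<nu>_def \<gamma>_def E_def\<close>)
      then obtain z T where "periodic_one_impact a b k M \<epsilon> z T \<and> finite_time_stable a b k M \<epsilon> z \<and>
           (\<forall>t. norm (z t) \<le> 2 * K0 * \<epsilon>)" by (auto simp: K0_def)
      then show ?thesis by (intro exI[of _ "(z, T)"]) simp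
    next
      case False then show ?thesis by blast
    qed
  qed
  from choice[OF ex] obtain f where f: "\<And>\<epsilon>. 0 < \<epsilon> \<and> \<epsilon> < \<epsilon>0 \<Longrightarrow>
     periodic_one_impact a b k M \<epsilon> (fst (f \<epsilon>)) (snd (f \<epsilon>)) \<and> finite_time_stable a b k M \<epsilon> (fst (f \<epsilon>)) \<and>
     (\<forall>t. norm (fst (f \<epsilon>) t) \<le> 2 * K0 * \<epsilon>)" by blast
  show ?thesis
  proof (intro exI[of _ \<epsilon>0] conjI \<epsilon>0 exI[of _ "\<lambda>\<epsilon>. fst (f \<epsilon>)"] exI[of _ "\<lambda>\<epsilon>. snd (f \<epsilon>)"])
    show "\<forall>\<epsilon>. 0 < \<epsilon> \<and> \<epsilon> < \<epsilon>0 \<longrightarrow>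
        periodic_one_impact a b k M \<epsilon> (fst (f \<epsilon>)) (snd (f \<epsilon>)) \<and> finite_time_stable a b k M \<epsilon> (fst (f \<epsilon>))"
      using f by blast
    show "\<forall>\<eta>>0. \<exists>\<epsilon>1>0. \<forall>\<epsilon>. 0 < \<epsilon> \<and> \<epsilon> < \<epsilon>1 \<and> \<epsilon> < \<epsilon>0 \<longrightarrow> (\<forall>t\<ge>0. norm (fst (f \<epsilon>) t) \<le> \<eta>)"
    proof (intro allI impI)
      fix \<eta>' :: real assume \<eta>': "\<eta>' > 0"
      show "\<exists>\<epsilon>1>0. \<forall>\<epsilon>. 0 < \<epsilon> \<and> \<epsilon> < \<epsilon>1 \<and> \<epsilon> < \<epsilon>0 \<longrightarrow> (\<forall>t\<ge>0. norm (fst (f \<epsilon>) t) \<le> \<eta>')"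
      proof (intro exI[of _ "\<eta>' / (2 * K0)"] conjI allI impI)
        show "\<eta>' / (2 * K0) > 0" using \<eta>' K0 by simp
        fix \<epsilon> t :: real assume e: "0 < \<epsilon> \<and> \<epsilon> < \<eta>' / (2 * K0) \<and> \<epsilon> < \<epsilon>0" and "t \<ge> 0"
        have "norm (fst (f \<epsilon>) t) \<le> 2 * K0 * \<epsilon>" using f[of \<epsilon>] e by blast
        also have "2 * K0 * \<epsilon> \<le> 2 * K0 * (\<eta>' / (2 * K0))" using e K0 by (intro mult_left_mono) auto
        also have "\<dots> = \<eta>'" using K0 by simp
        finally show "norm (fst (f \<epsilon>) t) \<le> \<eta>'" .
      qed
    qed
  qed
qed


end
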